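(* Let $V$ be a separable Banach space, $\alpha,\beta\in(0,1)$ with $\alpha(1+\beta)>1$, and $A\in C^\alpha_tC^{1+\beta}_{V,\mathrm{loc}}$. Then for any $x_0\in V$ there exists a unique maximal solution $x$ to $x_t=x_0+\int_0^tA(\mathrm{d} s,x_s)$, defined on $[0,T^\ast)\subset[0,T]$, such that either $T^\ast=T$ or $\lim_{t\to T^\ast}\|x_t\|_V=+\infty$. In particular, if $A\in C^\alpha_tC^{\beta,\lambda}_V\cap C^\alpha_tC^{1+\beta}_{V,\mathrm{loc}}$ with $\lambda\in(0,1]$, $\alpha(1+\beta)>1$ and $\beta+\lambda\le1$, then global existence and uniqueness holds.
   Context: Fix $T>0$. For $f:V\to W$ and $R>0$: $\llbracket f\rrbracket_{\beta,R}=\sup_{x\ne y,\|x\|,\|y\|\le R}\|f(x)-f(y)\|_W/\|x-y\|_V^\beta$, $\|f\|_{\beta,R}=\llbracket f\rrbracket_{\beta,R}+\sup_{\|x\|\le R}\|f(x)\|_W$; $\llbracket f\rrbracket_{\beta,\lambda}=\sup_{R\ge1}R^{-\lambda}\llbracket f\rrbracket_{\beta,R}$, $\|f\|_{\beta,\lambda}=\llbracket f\rrbracket_{\beta,\lambda}+\|f(0)\|_W$. Fields $A:[0,T]\times V\to V$ satisfy $A(0,\cdot)=0$, $A_{s,t}(x)=A(t,x)-A(s,x)$. $A\in C^\alpha_tC^{\beta}_{V,\mathrm{loc}}$ if $\sup_{s<t}\|A_{s,t}\|_{\beta,R}/|t-s|^\alpha<\infty$ for all $R$; $A\in C^\alpha_tC^{1+\beta}_{V,\mathrm{loc}}$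 if moreover $A(t,\cdot)$ is Fréchet differentiable and $DA$ (with values in $\mathcal L(V;V)$) satisfies the same local condition; $A\in C^\alpha_tC^{\beta,\lambda}_V$ if $\sup_{s<t}\|A_{s,t}\|_{\beta,\lambda}/|t-s|^\alpha<\infty$. Integral: $\int_s^tA(\mathrm{d} r,x_r)=\lim_{|\Pi|\to0}\sum_iA_{t_i,t_{i+1}}(x_{t_i})$ for $\gamma$-Hölder $x$ with $\alpha+\beta\gamma>1$. A solution on an interval $I$ starting at $0$ is a path that on each compact subinterval $[0,t]\subset I$ is $\gamma$-Hölder for some $\gamma$ with $\alpha+\beta\gamma>1$ and satisfies the identity; a maximal solution is one that cannot be extended. *)

theory Defs
  imports "HOL-Analysis.Analysis"
begin

text \<open>Time-Hoelder / local space-Hoelder class C^alpha_t C^beta_{V,loc} on [0,T]: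
  for every R>0, sup_{s<t} ||A_{s,t}||_{beta,R} / |t-s|^alpha < infinity, written out.\<close>
definition loc_holder_field ::
  "real \<Rightarrow> real \<Rightarrow> real \<Rightarrow> (real \<Rightarrow> 'a::real_normed_vector \<Rightarrow> 'b::real_normed_vector) \<Rightarrow> bool" where
  "loc_holder_field T \<alpha> \<beta> A \<longleftrightarrow>
     (\<forall>R>0. \<exists>C. \<forall>s t. 0 \<le> s \<and> s < t \<and> t \<le> T \<longrightarrow>
        (\<forall>x. norm x \<le> R \<longrightarrow> norm (A t x - A s x) \<le> C * (t - s) powr \<alpha>) \<and>
        (\<forall>x y. norm x \<le> R \<and> norm y \<le> R \<and> x \<noteq> y \<longrightarrow>
           norm ((A t x - A s x) - (A t y - A s y)) \<le> C * (t - s) powr \<alpha> * norm (x - y) powr \<beta>))"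

text \<open>C^alpha_t C^{1+beta}_{V,loc}: Frechet differentiable in space with derivative DA
  (values in bounded linear operators, operator norm), DA also in the local class.\<close>
definition loc_holder_field_1 ::
  "real \<Rightarrow> real \<Rightarrow> real \<Rightarrow> (real \<Rightarrow> 'a::real_normed_vector \<Rightarrow> 'a) \<Rightarrow> bool" where
  "loc_holder_field_1 T \<alpha> \<beta> A \<longleftrightarrow> loc_holder_field T \<alpha> \<beta> A \<and>
     (\<exists>DA :: real \<Rightarrow> 'a \<Rightarrow> ('a \<Rightarrow>\<^sub>L 'a).
        (\<forall>t\<in>{0..T}. \<forall>x. (A t has_derivative blinfun_apply (DA t x)) (at x)) \<and>
        loc_holder_field T \<alpha> \<beta> DA)"

text \<open>C^alpha_t C^{beta,lambda}_V: sup_{s<t} ||A_{s,t}||_{beta,lambda} / |t-s|^alpha < infinity,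
  where ||f||_{beta,lambda} = sup_{R>=1} R^{-lambda} [f]_{beta,R} + ||f(0)||, written out.\<close>
definition growth_holder_field ::
  "real \<Rightarrow> real \<Rightarrow> real \<Rightarrow> real \<Rightarrow> (real \<Rightarrow> 'a::real_normed_vector \<Rightarrow> 'b::real_normed_vector) \<Rightarrow> bool" where
  "growth_holder_field T \<alpha> \<beta> lam A \<longleftrightarrow>
     (\<exists>C. \<forall>s t. 0 \<le> s \<and> s < t \<and> t \<le> T \<longrightarrow>
        norm (A t 0 - A s 0) \<le> C * (t - s) powr \<alpha> \<and>
        (\<forall>R\<ge>1. \<forall>x y. norm x \<le> R \<and> norm y \<le> R \<and> x \<noteq> y \<longrightarrow>
           norm ((A t x - A s x) - (A t y - A s y)) \<le> C * (t - s) powr \<alpha> * R powr lam * norm (x - y) powr \<beta>))"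

definition holder_on :: "real \<Rightarrow> real set \<Rightarrow> (real \<Rightarrow> 'a::real_normed_vector) \<Rightarrow> bool" where
  "holder_on \<gamma> S x \<longleftrightarrow> (\<exists>C. \<forall>u\<in>S. \<forall>v\<in>S. norm (x u - x v) \<le> C * \<bar>u - v\<bar> powr \<gamma>)"

definition partition_of :: "(nat \<Rightarrow> real) \<Rightarrow> nat \<Rightarrow> real \<Rightarrow> real \<Rightarrow> bool" where
  "partition_of p n s t \<longleftrightarrow> p 0 = s \<and> p n = t \<and> (\<forall>i<n. p i < p (Suc i))"

definition riemann_sum :: "(real \<Rightarrow> 'a \<Rightarrow> 'a::real_normed_vector) \<Rightarrow> (real \<Rightarrow> 'a) \<Rightarrow> (nat \<Rightarrow> real) \<Rightarrow> nat \<Rightarrow> 'a" where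
  "riemann_sum A x p n = (\<Sum>i<n. A (p (Suc i)) (x (p i)) - A (p i) (x (p i)))"

definition young_has_integral :: "(real \<Rightarrow> 'a \<Rightarrow> 'a::real_normed_vector) \<Rightarrow> (real \<Rightarrow> 'a) \<Rightarrow> real \<Rightarrow> real \<Rightarrow> 'a \<Rightarrow> bool" where
  "young_has_integral A x s t I \<longleftrightarrow>
     (\<forall>\<epsilon>>0. \<exists>\<delta>>0. \<forall>p n. partition_of p n s t \<and> (\<forall>i<n. p (Suc i) - p i < \<delta>) \<longrightarrow>
        norm (riemann_sum A x p n - I) < \<epsilon>)"

definition is_solution :: "real \<Rightarrow> real \<Rightarrow> real \<Rightarrow> (real \<Rightarrow> 'a \<Rightarrow> 'a::real_normed_vector) \<Rightarrow> 'a \<Rightarrow> real set \<Rightarrow> (real \<Rightarrow> 'a) \<Rightarrow> bool" where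
  "is_solution T \<alpha> \<beta> A x0 I x \<longleftrightarrow>
     is_interval I \<and> 0 \<in> I \<and> I \<subseteq> {0..T} \<and>
     (\<forall>t\<in>I. \<exists>\<gamma>. 0 < \<gamma> \<and> \<gamma> \<le> 1 \<and> \<alpha> + \<beta> * \<gamma> > 1 \<and> holder_on \<gamma> {0..t} x) \<and>
     (\<forall>t\<in>I. young_has_integral A x 0 t (x t - x0))"

definition is_max_solution :: "real \<Rightarrow> real \<Rightarrow> real \<Rightarrow> (real \<Rightarrow> 'a \<Rightarrow> 'a::real_normed_vector) \<Rightarrow> 'a \<Rightarrow> real set \<Rightarrow> (real \<Rightarrow> 'a) \<Rightarrow> bool" where
  "is_max_solution T \<alpha> \<beta> A x0 I x \<longleftrightarrow>
     is_solution T \<alpha> \<beta> A x0 I x \<and>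
     \<not> (\<exists>J y. is_solution T \<alpha> \<beta> A x0 J y \<and> I \<subset> J \<and> (\<forall>t\<in>I. y t = x t))"

end

theory Submission
  imports Defs
begin

definition psum :: "(real \<Rightarrow> real \<Rightarrow> 'a::real_normed_vector) \<Rightarrow> (nat \<Rightarrow> real) \<Rightarrow> nat \<Rightarrow> 'a" where
  "psum G p n = (\<Sum>i<n. G (p i) (p (Suc i)))"

definition sew_conv :: "(real \<Rightarrow> real \<Rightarrow> 'a::real_normed_vector) \<Rightarrow> real \<Rightarrow> real \<Rightarrow> 'a \<Rightarrow> bool" where
  "sew_conv G s t I \<longleftrightarrow>
     (\<forall>\<epsilon>>0. \<exists>\<delta>>0. \<forall>p n. partition_of p n s t \<and> (\<forall>i<n. p (Suc i) - p i < \<delta>) \<longrightarrow>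
        norm (psum G p n - I) < \<epsilon>)"

definition gam :: "(real \<Rightarrow> 'a \<Rightarrow> 'a::real_normed_vector) \<Rightarrow> (real \<Rightarrow> 'a) \<Rightarrow> real \<Rightarrow> real \<Rightarrow> 'a" where
  "gam A x u v = A v (x u) - A u (x u)"

lemma young_iff: "young_has_integral A x s t I \<longleftrightarrow> sew_conv (gam A x) s t I"
  unfolding young_has_integral_def sew_conv_def riemann_sum_def psum_def gam_def by simp

lemma part_mono: "partition_of p n s t \<Longrightarrow> i \<le> j \<Longrightarrow> j \<le> n \<Longrightarrow> p i \<le> p j"
proof (induction j)
  case 0 then show ?case by simp
next
  case (Suc j)
  show ?case
  proof (cases "i = Suc j")
    case True then show ?thesis by simp
  next
    case False
    then have "i \<le> j" using Suc.prems by simp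
    then have "p i \<le> p j" using Suc by simp
    also have "p j < p (Suc j)" using Suc.prems unfolding partition_of_def by simp
    finally show ?thesis by simp
  qed
qed

lemma part_strict: "partition_of p n s t \<Longrightarrow> i < j \<Longrightarrow> j \<le> n \<Longrightarrow> p i < p j"
proof -
  assume a: "partition_of p n s t" "i < j" "j \<le> n"
  then obtain j' where j': "j = Suc j'" by (cases j) auto
  have "p i \<le> p j'" using part_mono[OF a(1)] a j' by auto
  also have "p j' < p j" using a j' unfolding partition_of_def by auto
  finally show ?thesis .
qed

lemma part_range: "partition_of p n s t \<Longrightarrow> i \<le> n \<Longrightarrow> s \<le> p i \<and> p i \<le> t"
  using part_mono[of p n s t 0 i] part_mono[of p n s t i n] unfolding partition_of_def by auto

lemma part_le: "partition_of p n s t \<Longrightarrow> s \<le> t"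
  using part_range[of p n s t n] by auto

lemma part_lt: "partition_of p n s t \<Longrightarrow> 0 < n \<Longrightarrow> s < t"
  using part_strict[of p n s t 0 n] unfolding partition_of_def by auto

lemma part_0: "partition_of p 0 s t \<longleftrightarrow> p 0 = s \<and> s = t"
  unfolding partition_of_def by auto

lemma part_n0: "partition_of p n s s \<Longrightarrow> n = 0"
  using part_lt by fastforce

lemma part_take: "partition_of p n s t \<Longrightarrow> k \<le> n \<Longrightarrow> partition_of p k s (p k)"
  unfolding partition_of_def by auto

lemma part_drop: "partition_of p n s t \<Longrightarrow> k \<le> n \<Longrightarrow> partition_of (\<lambda>i. p (k+i)) (n-k) (p k) t"
  unfolding partition_of_def by auto

lemma psum_split: "k \<le> n \<Longrightarrow> psum G p n = psum G p k + psum G (\<lambda>i. p (k+i)) (n-k)"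
proof (induction n)
  case 0 then show ?case by (simp add: psum_def)
next
  case (Suc n)
  show ?case
  proof (cases "k = Suc n")
    case True then show ?thesis by (simp add: psum_def)
  next
    case False
    then have "k \<le> n" using Suc by auto
    then have e: "Suc n - k = Suc (n - k)" by auto
    show ?thesis using Suc.IH[OF \<open>k \<le> n\<close>] \<open>k \<le> n\<close> unfolding psum_def e
      by (simp add: add.assoc)
  qed
qed

lemma psum_cong: "(\<And>i. i \<le> n \<Longrightarrow> p i = q i) \<Longrightarrow> psum G p n = psum G q n"
  unfolding psum_def by (intro sum.cong) auto

lemma psum_0[simp]: "psum G p 0 = 0" by (simp add: psum_def)
lemma psum_1: "psum G p 1 = G (p 0) (p 1)" by (simp add: psum_def)

definition csew :: "real \<Rightarrow> real" where "csew \<theta> = 2 / (1 - 2 powr (1 - \<theta>))"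

lemma csew_pos: "\<theta> > 1 \<Longrightarrow> csew \<theta> > 0"
proof -
  assume "\<theta> > 1"
  then have "2 powr (1 - \<theta>) < 2 powr 0" by (intro powr_less_mono) auto
  then show ?thesis unfolding csew_def by simp
qed

lemma csew_eq: "\<theta> > 1 \<Longrightarrow> csew \<theta> * 2 powr (1 - \<theta>) + 2 = csew \<theta>"
proof -
  assume "\<theta> > 1"
  then have "2 powr (1 - \<theta>) < 2 powr 0" by (intro powr_less_mono) auto
  then have "2 powr (1 - \<theta>) < 1" by simp
  then have q: "1 - 2 powr (1 - \<theta>) \<noteq> 0" by linarith
  have "2 / (1 - q) * q + 2 = 2 / (1 - q)" if "1 - q \<noteq> 0" for q :: real
    using that by (simp add: field_simps)
  from this[OF q] show ?thesis unfolding csew_def .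
qed

lemma half_powr: "x \<ge> 0 \<Longrightarrow> 2 * (x / 2) powr \<theta> = 2 powr (1 - \<theta>) * x powr (\<theta>::real)"
  by (simp add: powr_divide powr_diff field_simps)

lemma norm4: "norm (a + b - c - d) \<le> norm a + norm b + norm c + norm (d::'a::real_normed_vector)"
proof -
  have "norm (a + b - c - d) \<le> norm (a + b - c) + norm d" by (rule norm_triangle_ineq4)
  moreover have "norm (a + b - c) \<le> norm (a + b) + norm c" by (rule norm_triangle_ineq4)
  moreover have "norm (a + b) \<le> norm a + norm b" by (rule norm_triangle_ineq)
  ultimately show ?thesis by linarith
qed

lemma sew_bound:
  fixes G :: "real \<Rightarrow> real \<Rightarrow> 'a::real_normed_vector"
  assumes th: "\<theta> > 1" and K: "K \<ge> 0"
    and d: "\<And>s u t. a \<le> s \<Longrightarrow> s \<le> u \<Longrightarrow> u \<le> t \<Longrightarrow> t \<le> b \<Longrightarrow>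
              norm (G s t - G s u - G u t) \<le> K * (t - s) powr \<theta>"
  shows "partition_of p n s t \<Longrightarrow> a \<le> s \<Longrightarrow> t \<le> b \<Longrightarrow>
           norm (psum G p n - G s t) \<le> csew \<theta> * K * (t - s) powr \<theta>"
proof (induction n arbitrary: p s t rule: less_induct)
  case (less n)
  note P = less.prems(1)
  show ?case
  proof (cases "n = 0")
    case True
    then have "s = t" using P part_0 by auto
    have "norm (G s s - G s s - G s s) \<le> K * (s - s) powr \<theta>" using d[of s s s] less.prems \<open>s = t\<close> by auto
    then have "G s s = 0" by simp
    then show ?thesis using True \<open>s = t\<close> by simp
  next
    case False
    have st: "s < t" using part_lt[OF P] False by auto
    define m where "m = (s + t) / 2"
    define k where "k = Max {k. k \<le> n \<and> p k \<le> m}"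
    have fin: "finite {k. k \<le> n \<and> p k \<le> m}" by auto
    have ne: "0 \<in> {k. k \<le> n \<and> p k \<le> m}" using P st unfolding partition_of_def m_def by auto
    have kin: "k \<le> n \<and> p k \<le> m" using Max_in[OF fin] ne unfolding k_def by blast
    have kn: "k < n"
    proof (rule ccontr)
      assume "\<not> k < n" then have "k = n" using kin by auto
      then show False using kin P st unfolding partition_of_def m_def by auto
    qed
    have pk1: "p (Suc k) > m"
    proof (rule ccontr)
      assume "\<not> p (Suc k) > m"
      then have "Suc k \<in> {k. k \<le> n \<and> p k \<le> m}" using kn by auto
      then have "Suc k \<le> k" using Max_ge[OF fin] unfolding k_def by blast
      then show False by simp
    qed
    define u where "u = p k"
    define v where "v = p (Suc k)"
    have ru: "s \<le> u" "u \<le> m" using part_range[OF P, of k] kin unfolding u_def by auto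
    have rv: "m < v" "v \<le> t" using part_range[OF P, of "Suc k"] kn pk1 unfolding v_def by auto
    have uv: "u \<le> v" using ru rv by auto
    have P1: "partition_of p k s u" using part_take[OF P, of k] kin unfolding u_def by auto
    have P3: "partition_of (\<lambda>i. p (Suc k + i)) (n - Suc k) v t"
      using part_drop[OF P, of "Suc k"] kn unfolding v_def by auto
    have IH1: "norm (psum G p k - G s u) \<le> csew \<theta> * K * (u - s) powr \<theta>"
      using less.IH[OF kn P1] less.prems ru rv by auto
    have IH3: "norm (psum G (\<lambda>i. p (Suc k + i)) (n - Suc k) - G v t) \<le> csew \<theta> * K * (t - v) powr \<theta>"
      using less.IH[OF _ P3] less.prems ru rv kn by auto
    have split: "psum G p n = psum G p k + G u v + psum G (\<lambda>i. p (Suc k + i)) (n - Suc k)"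
    proof -
      have "psum G p n = psum G p (Suc k) + psum G (\<lambda>i. p (Suc k + i)) (n - Suc k)"
        using psum_split[of "Suc k" n G p] kn by auto
      moreover have "psum G p (Suc k) = psum G p k + G u v"
        unfolding psum_def u_def v_def by simp
      ultimately show ?thesis by simp
    qed
    have d1: "norm (G s v - G s u - G u v) \<le> K * (v - s) powr \<theta>"
      using d[of s u v] less.prems ru rv by auto
    have d2: "norm (G s t - G s v - G v t) \<le> K * (t - s) powr \<theta>"
      using d[of s v t] less.prems ru rv by auto
    have "K * (v - s) powr \<theta> \<le> K * (t - s) powr \<theta>"
      using K ru rv th by (intro mult_left_mono powr_mono2) auto
    have e: "psum G p n - G s t = (psum G p k - G s u) + (psum G (\<lambda>i. p (Suc k + i)) (n - Suc k) - G v t)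
              - (G s v - G s u - G u v) - (G s t - G s v - G v t)"
      using split by (simp add: algebra_simps)
    have "norm (psum G p n - G s t) \<le> norm (psum G p k - G s u) + norm (psum G (\<lambda>i. p (Suc k + i)) (n - Suc k) - G v t)
              + norm (G s v - G s u - G u v) + norm (G s t - G s v - G v t)"
      unfolding e by (rule norm4)
    also have "\<dots> \<le> csew \<theta> * K * (u - s) powr \<theta> + csew \<theta> * K * (t - v) powr \<theta> + K * (t - s) powr \<theta> + K * (t - s) powr \<theta>"
      using IH1 IH3 d1 d2 \<open>K * (v - s) powr \<theta> \<le> K * (t - s) powr \<theta>\<close> by linarith
    also have "\<dots> \<le> csew \<theta> * K * ((t - s) / 2) powr \<theta> + csew \<theta> * K * ((t - s) / 2) powr \<theta> + 2 * K * (t - s) powr \<theta>"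
    proof -
      have ck: "csew \<theta> * K \<ge> 0" using csew_pos[OF th] K by auto
      have "(u - s) powr \<theta> \<le> ((t - s) / 2) powr \<theta>" using ru th unfolding m_def by (intro powr_mono2) auto
      moreover have "(t - v) powr \<theta> \<le> ((t - s) / 2) powr \<theta>" using rv th unfolding m_def by (intro powr_mono2) auto
      ultimately have "csew \<theta> * K * (u - s) powr \<theta> \<le> csew \<theta> * K * ((t - s) / 2) powr \<theta>"
        "csew \<theta> * K * (t - v) powr \<theta> \<le> csew \<theta> * K * ((t - s) / 2) powr \<theta>"
        using ck by (auto intro: mult_left_mono)
      then show ?thesis by linarith
    qed
    also have "\<dots> = csew \<theta> * K * (2 * ((t - s) / 2) powr \<theta>) + 2 * K * (t - s) powr \<theta>"
      by (simp add: algebra_simps)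
    also have "\<dots> = (csew \<theta> * 2 powr (1 - \<theta>) + 2) * K * (t - s) powr \<theta>"
      using half_powr[of "t - s" \<theta>] st by (simp add: algebra_simps)
    also have "\<dots> = csew \<theta> * K * (t - s) powr \<theta>" using csew_eq[OF th] by simp
    finally show ?thesis .
  qed
qed

definition refines :: "(nat \<Rightarrow> real) \<Rightarrow> nat \<Rightarrow> (nat \<Rightarrow> real) \<Rightarrow> nat \<Rightarrow> bool" where
  "refines q m p n \<longleftrightarrow> (\<forall>i\<le>n. \<exists>j\<le>m. q j = p i)"

lemma part_inj: "partition_of p n s t \<Longrightarrow> i \<le> n \<Longrightarrow> j \<le> n \<Longrightarrow> p i = p j \<Longrightarrow> i = j"
  using part_strict[of p n s t i j] part_strict[of p n s t j i] by (cases i j rule: linorder_cases) auto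

lemma part_le_iff: "partition_of p n s t \<Longrightarrow> i \<le> n \<Longrightarrow> j \<le> n \<Longrightarrow> p i \<le> p j \<longleftrightarrow> i \<le> j"
  using part_strict[of p n s t j i] part_mono[of p n s t i j] by (cases "i \<le> j") auto

lemma refine_bound:
  fixes G :: "real \<Rightarrow> real \<Rightarrow> 'a::real_normed_vector"
  assumes th: "\<theta> > 1" and K: "K \<ge> 0"
    and d: "\<And>s u t. a \<le> s \<Longrightarrow> s \<le> u \<Longrightarrow> u \<le> t \<Longrightarrow> t \<le> b \<Longrightarrow>
              norm (G s t - G s u - G u t) \<le> K * (t - s) powr \<theta>"
  shows "partition_of p n s t \<Longrightarrow> partition_of q m s t \<Longrightarrow> refines q m p n \<Longrightarrow> a \<le> s \<Longrightarrow> t \<le> b \<Longrightarrow>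
           norm (psum G q m - psum G p n) \<le> (\<Sum>i<n. csew \<theta> * K * (p (Suc i) - p i) powr \<theta>)"
proof (induction n arbitrary: p q m s)
  case 0
  then have "s = t" using part_0 by auto
  then have "m = 0" using part_n0 0 by auto
  then show ?case by simp
next
  case (Suc n)
  note P = Suc.prems(1) and Q = Suc.prems(2)
  obtain j where j: "j \<le> m" "q j = p 1" using Suc.prems(3) unfolding refines_def by force
  have p1: "s < p 1" using part_strict[OF P, of 0 1] P unfolding partition_of_def by auto
  have j0: "0 < j"
  proof (rule ccontr)
    assume "\<not> 0 < j" then have "j = 0" by simp
    then show False using j p1 Q unfolding partition_of_def by simp
  qed
  have Q1: "partition_of q j s (p 1)" using part_take[OF Q j(1)] j by simp
  have Q2: "partition_of (\<lambda>i. q (j+i)) (m-j) (p 1) t" using part_drop[OF Q j(1)] j by simp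
  have P2: "partition_of (\<lambda>i. p (1+i)) n (p 1) t" using part_drop[OF P, of 1] by simp
  have R2: "refines (\<lambda>i. q (j+i)) (m-j) (\<lambda>i. p (1+i)) n"
    unfolding refines_def
  proof (intro allI impI)
    fix i assume i: "i \<le> n"
    obtain j' where j': "j' \<le> m" "q j' = p (1+i)" using Suc.prems(3) i unfolding refines_def by force
    have "p 1 \<le> p (1+i)" using part_mono[OF P, of 1 "1+i"] i by auto
    then have "q j \<le> q j'" using j j' by simp
    then have "j \<le> j'" using part_le_iff[OF Q j(1) j'(1)] by simp
    then show "\<exists>j''\<le>m - j. q (j + j'') = p (1 + i)" using j' by (intro exI[of _ "j' - j"]) auto
  qed
  have IH: "norm (psum G (\<lambda>i. q (j+i)) (m-j) - psum G (\<lambda>i. p (1+i)) n)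
      \<le> (\<Sum>i<n. csew \<theta> * K * (p (1 + Suc i) - p (1 + i)) powr \<theta>)"
    using Suc.IH[OF P2 Q2 R2] Suc.prems p1 by auto
  have B1: "norm (psum G q j - G s (p 1)) \<le> csew \<theta> * K * (p 1 - s) powr \<theta>"
    using sew_bound[OF th K d Q1] Suc.prems p1 part_le[OF P2] by auto
  have eq: "psum G q m - psum G p (Suc n) = (psum G q j - G s (p 1)) +
      (psum G (\<lambda>i. q (j+i)) (m-j) - psum G (\<lambda>i. p (1+i)) n)"
  proof -
    have "psum G q m = psum G q j + psum G (\<lambda>i. q (j+i)) (m-j)" using psum_split j by blast
    moreover have "psum G p (Suc n) = psum G p 1 + psum G (\<lambda>i. p (1+i)) n"
      using psum_split[of 1 "Suc n" G p] by simp
    moreover have "psum G p 1 = G s (p 1)" using P by (simp add: psum_def partition_of_def)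
    ultimately show ?thesis by (simp add: algebra_simps)
  qed
  have "norm (psum G q m - psum G p (Suc n)) \<le> csew \<theta> * K * (p 1 - s) powr \<theta> +
     (\<Sum>i<n. csew \<theta> * K * (p (1 + Suc i) - p (1 + i)) powr \<theta>)"
    unfolding eq using B1 IH by (meson add_mono norm_triangle_le)
  also have "\<dots> = (\<Sum>i<Suc n. csew \<theta> * K * (p (Suc i) - p i) powr \<theta>)"
    unfolding sum.lessThan_Suc_shift using P by (simp add: partition_of_def)
  finally show ?case .
qed

lemma sum_gaps: "partition_of p n s t \<Longrightarrow> (\<Sum>i<n. p (Suc i) - p i) = t - s"
  unfolding partition_of_def by (simp add: sum_lessThan_telescope)

lemma gap_sum_bound:
  assumes P: "partition_of p n s t" and th: "\<theta> > 1" and c: "c \<ge> 0" and dl: "\<forall>i<n. p (Suc i) - p i < \<delta>"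
  shows "(\<Sum>i<n. c * (p (Suc i) - p i) powr \<theta>) \<le> c * \<delta> powr (\<theta> - 1) * (t - s)"
proof -
  have "(\<Sum>i<n. c * (p (Suc i) - p i) powr \<theta>) \<le> (\<Sum>i<n. c * \<delta> powr (\<theta> - 1) * (p (Suc i) - p i))"
  proof (intro sum_mono)
    fix i assume i: "i \<in> {..<n}"
    have g: "0 < p (Suc i) - p i" using P i unfolding partition_of_def by auto
    have "(p (Suc i) - p i) powr \<theta> = (p (Suc i) - p i) powr (\<theta> - 1) * (p (Suc i) - p i)"
      using g by (simp add: powr_diff)
    also have "\<dots> \<le> \<delta> powr (\<theta> - 1) * (p (Suc i) - p i)"
      using g dl i th by (intro mult_right_mono powr_mono2) auto
    finally show "c * (p (Suc i) - p i) powr \<theta> \<le> c * \<delta> powr (\<theta> - 1) * (p (Suc i) - p i)"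
      using c by (simp add: mult_left_mono mult.assoc)
  qed
  also have "\<dots> = c * \<delta> powr (\<theta> - 1) * (t - s)"
    using sum_gaps[OF P] by (simp add: sum_distrib_left[symmetric])
  finally show ?thesis .
qed

lemma merge_exists:
  assumes P: "partition_of p n s t" and Q: "partition_of q m s t"
  shows "\<exists>r N. partition_of r N s t \<and> refines r N p n \<and> refines r N q m"
proof -
  define S where "S = p ` {..n} \<union> q ` {..m}"
  define L where "L = sorted_list_of_set S"
  have fin: "finite S" unfolding S_def by auto
  have setL: "set L = S" unfolding L_def using fin by simp
  have sw: "sorted_wrt (<) L" unfolding L_def by (rule strict_sorted_list_of_set)
  have Srange: "\<forall>x\<in>S. s \<le> x \<and> x \<le> t" unfolding S_def using part_range[OF P] part_range[OF Q] by auto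
  have sS: "s \<in> S" "t \<in> S" unfolding S_def using P unfolding partition_of_def by force+
  define N where "N = length L - 1"
  have lenpos: "length L > 0" using sS setL by auto
  have idx: "\<exists>j\<le>N. L ! j = x" if "x \<in> S" for x
  proof -
    have "x \<in> set L" using that setL by simp
    then obtain j where "j < length L" "L ! j = x" by (metis in_set_conv_nth)
    then show ?thesis unfolding N_def by (intro exI[of _ j]) auto
  qed
  have lt: "\<And>i j. i < j \<Longrightarrow> j \<le> N \<Longrightarrow> L ! i < L ! j"
    using sw lenpos unfolding N_def by (simp add: sorted_wrt_iff_nth_less)
  have inS: "L ! j \<in> S" if "j \<le> N" for j
  proof -
    have "j < length L" using that lenpos unfolding N_def by linarith
    then show ?thesis using setL nth_mem by blast
  qed
  have r0: "L ! 0 = s"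
  proof -
    obtain j where j: "j \<le> N" "L ! j = s" using idx sS by blast
    show ?thesis
    proof (cases "j = 0")
      case True then show ?thesis using j by simp
    next
      case False
      then have "L ! 0 < s" using lt[of 0 j] j by auto
      then show ?thesis using Srange inS[of 0] by force
    qed
  qed
  have rN: "L ! N = t"
  proof -
    obtain j where j: "j \<le> N" "L ! j = t" using idx sS by blast
    show ?thesis
    proof (cases "j = N")
      case True then show ?thesis using j by simp
    next
      case False
      then have "t < L ! N" using lt[of j N] j by auto
      then show ?thesis using Srange inS[of N] by force
    qed
  qed
  have "partition_of (\<lambda>j. L ! j) N s t" unfolding partition_of_def using r0 rN lt by auto
  moreover have "refines (\<lambda>j. L ! j) N p n" unfolding refines_def using idx unfolding S_def by blast
  moreover have "refines (\<lambda>j. L ! j) N q m" unfolding refines_def using idx unfolding S_def by blast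
  ultimately show ?thesis by blast
qed

lemma cauchy_bound:
  fixes G :: "real \<Rightarrow> real \<Rightarrow> 'a::real_normed_vector"
  assumes th: "\<theta> > 1" and K: "K \<ge> 0"
    and d: "\<And>s u t. a \<le> s \<Longrightarrow> s \<le> u \<Longrightarrow> u \<le> t \<Longrightarrow> t \<le> b \<Longrightarrow>
              norm (G s t - G s u - G u t) \<le> K * (t - s) powr \<theta>"
    and P: "partition_of p n s t" and Q: "partition_of q m s t" and ab: "a \<le> s" "t \<le> b"
    and dp: "\<forall>i<n. p (Suc i) - p i < \<delta>" and dq: "\<forall>i<m. q (Suc i) - q i < \<delta>"
  shows "norm (psum G p n - psum G q m) \<le> 2 * csew \<theta> * K * \<delta> powr (\<theta> - 1) * (t - s)"
proof -
  obtain r N where R: "partition_of r N s t" "refines r N p n" "refines r N q m"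
    using merge_exists[OF P Q] by blast
  have c: "csew \<theta> * K \<ge> 0" using csew_pos[OF th] K by simp
  have "norm (psum G r N - psum G p n) \<le> csew \<theta> * K * \<delta> powr (\<theta> - 1) * (t - s)"
    using refine_bound[OF th K d P R(1) R(2) ab] gap_sum_bound[OF P th c dp] by simp
  moreover have "norm (psum G r N - psum G q m) \<le> csew \<theta> * K * \<delta> powr (\<theta> - 1) * (t - s)"
    using refine_bound[OF th K d Q R(1) R(3) ab] gap_sum_bound[OF Q th c dq] by simp
  moreover have "psum G p n - psum G q m = (psum G r N - psum G q m) - (psum G r N - psum G p n)" by simp
  moreover have "norm ((psum G r N - psum G q m) - (psum G r N - psum G p n)) \<le>
      norm (psum G r N - psum G q m) + norm (psum G r N - psum G p n)" by (rule norm_triangle_ineq4)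
  ultimately show ?thesis by simp
qed

definition unif :: "real \<Rightarrow> real \<Rightarrow> nat \<Rightarrow> nat \<Rightarrow> real" where
  "unif s t N i = s + (t - s) * real i / real (Suc N)"

lemma unif_part: "s < t \<Longrightarrow> partition_of (unif s t N) (Suc N) s t"
  unfolding partition_of_def
proof (intro conjI allI impI)
  assume st: "s < t"
  show "unif s t N 0 = s" unfolding unif_def by simp
  have h: "(t - s) * real (Suc N) / real (Suc N) = t - s" by (rule nonzero_mult_div_cancel_right) simp
  show "unif s t N (Suc N) = t" unfolding unif_def h by simp
  fix i assume "i < Suc N"
  have "(t - s) * real i < (t - s) * real (Suc i)" using st by (intro mult_strict_left_mono) auto
  then have "(t - s) * real i / real (Suc N) < (t - s) * real (Suc i) / real (Suc N)"
    by (intro divide_strict_right_mono) auto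
  then show "unif s t N i < unif s t N (Suc i)" unfolding unif_def by simp
qed

lemma unif_gap: "unif s t N (Suc i) - unif s t N i = (t - s) / real (Suc N)"
proof -
  have "unif s t N (Suc i) - unif s t N i = (t - s) * real (Suc i) / real (Suc N) - (t - s) * real i / real (Suc N)"
    unfolding unif_def by simp
  also have "\<dots> = ((t - s) * real (Suc i) - (t - s) * real i) / real (Suc N)" by (rule diff_divide_distrib[symmetric])
  also have "(t - s) * real (Suc i) - (t - s) * real i = t - s" by (simp add: algebra_simps)
  finally show ?thesis .
qed

lemma unif_small: "s < t \<Longrightarrow> \<delta> > 0 \<Longrightarrow> \<exists>N0. \<forall>N\<ge>N0. (t - s) / real (Suc N) < \<delta>"
proof -
  assume st: "s < t" and d: "\<delta> > 0"
  obtain N0 :: nat where N0: "(t - s) / \<delta> < real N0" using reals_Archimedean2 by blast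
  show ?thesis
  proof (intro exI allI impI)
    fix N assume "N0 \<le> N"
    then have "real N0 \<le> real N" by simp
    then have "(t - s) / \<delta> < real (Suc N)" using N0 by simp
    then show "(t - s) / real (Suc N) < \<delta>" using d by (simp add: field_simps)
  qed
qed

lemma small_delta: "\<theta> > 1 \<Longrightarrow> B \<ge> 0 \<Longrightarrow> (e::real) > 0 \<Longrightarrow> \<exists>\<delta>>0. B * \<delta> powr (\<theta> - 1) < e"
proof -
  assume th: "\<theta> > 1" and B: "B \<ge> 0" and e: "e > 0"
  define \<delta> where "\<delta> = (e / (B + 1)) powr (1 / (\<theta> - 1))"
  have dp: "\<delta> > 0" unfolding \<delta>_def using e B by simp
  have "\<delta> powr (\<theta> - 1) = e / (B + 1)" unfolding \<delta>_def using th e B by (simp add: powr_powr)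
  moreover have "B * (e / (B + 1)) < e" using B e by (simp add: field_simps)
  ultimately show ?thesis using dp by (intro exI[of _ \<delta>]) auto
qed

lemma sew_conv_triv: "sew_conv G s s 0"
  unfolding sew_conv_def
proof (intro allI impI)
  fix \<epsilon> :: real assume e: "\<epsilon> > 0"
  show "\<exists>\<delta>>0. \<forall>p n. partition_of p n s s \<and> (\<forall>i<n. p (Suc i) - p i < \<delta>) \<longrightarrow> norm (psum G p n - 0) < \<epsilon>"
  proof (intro exI[of _ 1] conjI allI impI)
    show "(1::real) > 0" by simp
    fix p n assume a: "partition_of p n s s \<and> (\<forall>i<n. p (Suc i) - p i < 1)"
    then have "n = 0" using part_n0 by blast
    then show "norm (psum G p n - 0) < \<epsilon>" using e by simp
  qed
qed

lemma sew_le: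
  assumes st: "s \<le> t" and I: "sew_conv G s t I"
    and B: "\<And>p n. partition_of p n s t \<Longrightarrow> norm (psum G p n - Z) \<le> B"
  shows "norm (I - Z) \<le> B"
proof (cases "s = t")
  case True
  have P0: "partition_of (\<lambda>_. s) 0 s t" using True unfolding partition_of_def by simp
  have "norm (0 - I) < \<epsilon>" if e: "\<epsilon> > 0" for \<epsilon>
  proof -
    obtain \<delta> where "\<delta> > 0" "\<forall>p n. partition_of p n s t \<and> (\<forall>i<n. p (Suc i) - p i < \<delta>) \<longrightarrow> norm (psum G p n - I) < \<epsilon>"
      using I e unfolding sew_conv_def by blast
    then have "norm (psum G (\<lambda>_. s) 0 - I) < \<epsilon>" using P0 by blast
    then show ?thesis by simp
  qed
  note h = this
  have "I = 0"
  proof (rule ccontr)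
    assume "I \<noteq> 0" then have "norm I > 0" by simp
    from h[OF this] show False by simp
  qed
  then show ?thesis using B[OF P0] by simp
next
  case False
  then have st: "s < t" using st by simp
  have "norm (I - Z) \<le> B + \<epsilon>" if e: "\<epsilon> > 0" for \<epsilon>
  proof -
    obtain \<delta> where d: "\<delta> > 0" "\<forall>p n. partition_of p n s t \<and> (\<forall>i<n. p (Suc i) - p i < \<delta>) \<longrightarrow> norm (psum G p n - I) < \<epsilon>"
      using I e unfolding sew_conv_def by blast
    obtain N0 where N0: "\<forall>N\<ge>N0. (t - s) / real (Suc N) < \<delta>" using unif_small[OF st d(1)] by blast
    have "norm (psum G (unif s t N0) (Suc N0) - I) < \<epsilon>"
      using d(2) unif_part[OF st] unif_gap N0 by auto
    moreover have "norm (psum G (unif s t N0) (Suc N0) - Z) \<le> B" using B[OF unif_part[OF st]] .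
    moreover have "norm (I - Z) \<le> norm (psum G (unif s t N0) (Suc N0) - I) + norm (psum G (unif s t N0) (Suc N0) - Z)"
      using norm_triangle_ineq4[of "psum G (unif s t N0) (Suc N0) - Z" "psum G (unif s t N0) (Suc N0) - I"]
      by (simp add: norm_minus_commute)
    ultimately show ?thesis by linarith
  qed
  then show ?thesis by (rule field_le_epsilon)
qed

lemma psum_diff: "psum (\<lambda>x y. G x y - H x y) p n = psum G p n - psum H p n"
  unfolding psum_def by (simp add: sum_subtractf)

lemma psum_add: "psum (\<lambda>x y. G x y + H x y) p n = psum G p n + psum H p n"
  unfolding psum_def by (simp add: sum.distrib)

lemma sew_diff:
  assumes I: "sew_conv G s t I" and J: "sew_conv H s t J"
  shows "sew_conv (\<lambda>x y. G x y - H x y) s t (I - J)"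
  unfolding sew_conv_def
proof (intro allI impI)
  fix \<epsilon> :: real assume e0: "\<epsilon> > 0"
  then have e: "\<epsilon>/2 > 0" by simp
  obtain \<delta>1 where d1: "\<delta>1 > 0" "\<forall>p n. partition_of p n s t \<and> (\<forall>i<n. p (Suc i) - p i < \<delta>1) \<longrightarrow> norm (psum G p n - I) < \<epsilon>/2"
    using I e unfolding sew_conv_def by blast
  obtain \<delta>2 where d2: "\<delta>2 > 0" "\<forall>p n. partition_of p n s t \<and> (\<forall>i<n. p (Suc i) - p i < \<delta>2) \<longrightarrow> norm (psum H p n - J) < \<epsilon>/2"
    using J e unfolding sew_conv_def by blast
  show "\<exists>\<delta>>0. \<forall>p n. partition_of p n s t \<and> (\<forall>i<n. p (Suc i) - p i < \<delta>) \<longrightarrow>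
          norm (psum (\<lambda>x y. G x y - H x y) p n - (I - J)) < \<epsilon>"
  proof (intro exI[of _ "min \<delta>1 \<delta>2"] conjI allI impI)
    show "min \<delta>1 \<delta>2 > 0" using d1 d2 by simp
    fix p n assume a: "partition_of p n s t \<and> (\<forall>i<n. p (Suc i) - p i < min \<delta>1 \<delta>2)"
    have "norm (psum G p n - I) < \<epsilon>/2" using d1 a by auto
    moreover have "norm (psum H p n - J) < \<epsilon>/2" using d2 a by auto
    moreover have eq: "psum (\<lambda>x y. G x y - H x y) p n - (I - J) = (psum G p n - I) - (psum H p n - J)"
      unfolding psum_diff by (simp add: algebra_simps)
    moreover have "norm ((psum G p n - I) - (psum H p n - J)) \<le> norm (psum G p n - I) + norm (psum H p n - J)"
      by (rule norm_triangle_ineq4)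
    ultimately show "norm (psum (\<lambda>x y. G x y - H x y) p n - (I - J)) < \<epsilon>"
      unfolding eq by linarith
  qed
qed

lemma sew_unique:
  assumes st: "s \<le> t" and I: "sew_conv G s t I" and J: "sew_conv G s t J"
  shows "I = J"
proof -
  have "sew_conv (\<lambda>x y. G x y - G x y) s t (I - J)" by (rule sew_diff[OF I J])
  then have "norm (I - J - 0) \<le> 0"
    by (rule sew_le[OF st]) (simp add: psum_def)
  then show ?thesis by simp
qed

lemma sew_local_imp:
  assumes eq: "\<And>p n. partition_of p n s t \<Longrightarrow> psum G p n = psum H p n" and I: "sew_conv G s t I"
  shows "sew_conv H s t I"
  unfolding sew_conv_def
proof (intro allI impI)
  fix \<epsilon> :: real assume e: "\<epsilon> > 0"
  obtain \<delta> where d: "\<delta> > 0" "\<forall>p n. partition_of p n s t \<and> (\<forall>i<n. p (Suc i) - p i < \<delta>) \<longrightarrow> norm (psum G p n - I) < \<epsilon>"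
    using I e unfolding sew_conv_def by blast
  show "\<exists>\<delta>>0. \<forall>p n. partition_of p n s t \<and> (\<forall>i<n. p (Suc i) - p i < \<delta>) \<longrightarrow> norm (psum H p n - I) < \<epsilon>"
  proof (intro exI[of _ \<delta>] conjI allI impI)
    show "\<delta> > 0" by fact
    fix p n assume a: "partition_of p n s t \<and> (\<forall>i<n. p (Suc i) - p i < \<delta>)"
    have "norm (psum G p n - I) < \<epsilon>" using d(2) a by blast
    moreover have "psum G p n = psum H p n" using eq a by blast
    ultimately show "norm (psum H p n - I) < \<epsilon>" by simp
  qed
qed

lemma sew_local:
  assumes "\<And>x y. s \<le> x \<Longrightarrow> x \<le> y \<Longrightarrow> y \<le> t \<Longrightarrow> G x y = H x y"
  shows "sew_conv G s t I \<longleftrightarrow> sew_conv H s t I"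
proof -
  have eq: "psum G p n = psum H p n" if "partition_of p n s t" for p n
    unfolding psum_def
  proof (intro sum.cong refl)
    fix i assume "i \<in> {..<n}"
    then show "G (p i) (p (Suc i)) = H (p i) (p (Suc i))"
      using assms part_range[OF that, of i] part_range[OF that, of "Suc i"] part_mono[OF that, of i "Suc i"] by auto
  qed
  show ?thesis using sew_local_imp[of s t G H I] sew_local_imp[of s t H G I] eq by auto
qed

lemma sew_exists:
  fixes G :: "real \<Rightarrow> real \<Rightarrow> 'a::banach"
  assumes th: "\<theta> > 1" and K: "K \<ge> 0"
    and d: "\<And>s u t. a \<le> s \<Longrightarrow> s \<le> u \<Longrightarrow> u \<le> t \<Longrightarrow> t \<le> b \<Longrightarrow>
              norm (G s t - G s u - G u t) \<le> K * (t - s) powr \<theta>"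
    and ab: "a \<le> s" "s \<le> t" "t \<le> b"
  shows "\<exists>I. sew_conv G s t I \<and> norm (I - G s t) \<le> csew \<theta> * K * (t - s) powr \<theta>"
proof -
  have bnd: "norm (I - G s t) \<le> csew \<theta> * K * (t - s) powr \<theta>" if "sew_conv G s t I" for I
    using sew_le[OF ab(2) that] sew_bound[OF th K d _ ab(1) ab(3)] by blast
  show ?thesis
  proof (cases "s = t")
    case True
    then show ?thesis using sew_conv_triv bnd by blast
  next
    case False
    then have st: "s < t" using ab by simp
    define u where "u N = psum G (unif s t N) (Suc N)" for N
    define B0 where "B0 = 2 * csew \<theta> * K * (t - s)"
    have B0: "B0 \<ge> 0" unfolding B0_def using csew_pos[OF th] K st by simp
    have cb: "norm (psum G p n - psum G q m) \<le> B0 * \<delta> powr (\<theta> - 1)"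
      if "partition_of p n s t" "partition_of q m s t" "\<forall>i<n. p (Suc i) - p i < \<delta>" "\<forall>i<m. q (Suc i) - q i < \<delta>"
      for p n q m \<delta>
      using cauchy_bound[OF th K d that(1,2) ab(1,3) that(3,4)] unfolding B0_def by (simp add: algebra_simps)
    have "Cauchy u"
    proof (rule metric_CauchyI)
      fix e :: real assume e: "e > 0"
      obtain \<delta> where dl: "\<delta> > 0" "B0 * \<delta> powr (\<theta> - 1) < e" using small_delta[OF th B0 e] by blast
      obtain N0 where N0: "\<forall>N\<ge>N0. (t - s) / real (Suc N) < \<delta>" using unif_small[OF st dl(1)] by blast
      show "\<exists>M. \<forall>m\<ge>M. \<forall>n\<ge>M. dist (u m) (u n) < e"
      proof (intro exI allI impI)
        fix m n assume "N0 \<le> m" "N0 \<le> n"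
        then have "norm (u m - u n) \<le> B0 * \<delta> powr (\<theta> - 1)" unfolding u_def
          using cb[OF unif_part[OF st] unif_part[OF st]] unif_gap N0 by simp
        then show "dist (u m) (u n) < e" using dl by (simp add: dist_norm)
      qed
    qed
    then obtain I where uI: "u \<longlonglongrightarrow> I" using Cauchy_convergent_iff convergent_def by blast
    have "sew_conv G s t I" unfolding sew_conv_def
    proof (intro allI impI)
      fix \<epsilon> :: real assume e: "\<epsilon> > 0"
      obtain \<delta> where dl: "\<delta> > 0" "B0 * \<delta> powr (\<theta> - 1) < \<epsilon>" using small_delta[OF th B0 e] by blast
      show "\<exists>\<delta>>0. \<forall>p n. partition_of p n s t \<and> (\<forall>i<n. p (Suc i) - p i < \<delta>) \<longrightarrow> norm (psum G p n - I) < \<epsilon>"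
      proof (intro exI[of _ \<delta>] conjI allI impI)
        show "\<delta> > 0" by fact
        fix p n assume a: "partition_of p n s t \<and> (\<forall>i<n. p (Suc i) - p i < \<delta>)"
        obtain N0 where N0: "\<forall>N\<ge>N0. (t - s) / real (Suc N) < \<delta>" using unif_small[OF st dl(1)] by blast
        have ev: "eventually (\<lambda>N. norm (psum G p n - u N) \<le> B0 * \<delta> powr (\<theta> - 1)) sequentially"
          unfolding eventually_sequentially
        proof (intro exI[of _ N0] allI impI)
          fix N assume "N0 \<le> N"
          then have "\<forall>i<Suc N. unif s t N (Suc i) - unif s t N i < \<delta>" using unif_gap N0 by simp
          then show "norm (psum G p n - u N) \<le> B0 * \<delta> powr (\<theta> - 1)"
            unfolding u_def using cb[OF _ unif_part[OF st]] a by blast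
        qed
        have lim: "(\<lambda>N. norm (psum G p n - u N)) \<longlonglongrightarrow> norm (psum G p n - I)"
          by (intro tendsto_intros uI)
        have "norm (psum G p n - I) \<le> B0 * \<delta> powr (\<theta> - 1)"
          using tendsto_upperbound[OF lim ev] by simp
        then show "norm (psum G p n - I) < \<epsilon>" using dl by simp
      qed
    qed
    then show ?thesis using bnd by blast
  qed
qed

lemma sew_add:
  fixes G :: "real \<Rightarrow> real \<Rightarrow> 'a::real_normed_vector"
  assumes su: "s \<le> u" and ut: "u \<le> t"
    and I1: "sew_conv G s u I1" and I2: "sew_conv G u t I2" and I: "sew_conv G s t I"
  shows "I = I1 + I2"
proof (cases "s = u")
  case True
  then have "I1 = 0" using sew_unique[OF order.refl I1[unfolded True] sew_conv_triv] by simp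
  moreover have "I = I2" using sew_unique[OF ut, of G I I2] I I2 True by simp
  ultimately show ?thesis by simp
next
  case False
  then have su': "s < u" using su by simp
  show ?thesis
  proof (cases "u = t")
    case True
    then have "I2 = 0" using sew_unique[OF order.refl I2[unfolded True] sew_conv_triv] by simp
    moreover have "I = I1" using sew_unique[OF su, of G I I1] I I1 True by simp
    ultimately show ?thesis by simp
  next
    case False
    then have ut': "u < t" using ut by simp
    have "norm (I - (I1 + I2)) \<le> 3 * \<epsilon>" if e: "\<epsilon> > 0" for \<epsilon>
    proof -
      obtain \<delta> where d: "\<delta> > 0" "\<forall>p n. partition_of p n s t \<and> (\<forall>i<n. p (Suc i) - p i < \<delta>) \<longrightarrow> norm (psum G p n - I) < \<epsilon>"
        using I e unfolding sew_conv_def by blast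
      obtain \<delta>1 where d1: "\<delta>1 > 0" "\<forall>p n. partition_of p n s u \<and> (\<forall>i<n. p (Suc i) - p i < \<delta>1) \<longrightarrow> norm (psum G p n - I1) < \<epsilon>"
        using I1 e unfolding sew_conv_def by blast
      obtain \<delta>2 where d2: "\<delta>2 > 0" "\<forall>p n. partition_of p n u t \<and> (\<forall>i<n. p (Suc i) - p i < \<delta>2) \<longrightarrow> norm (psum G p n - I2) < \<epsilon>"
        using I2 e unfolding sew_conv_def by blast
      define dm where "dm = min \<delta> (min \<delta>1 \<delta>2)"
      have dm: "dm > 0" unfolding dm_def using d d1 d2 by simp
      obtain Na where Na: "\<forall>N\<ge>Na. (u - s) / real (Suc N) < dm" using unif_small[OF su' dm] by blast
      obtain Nb where Nb: "\<forall>N\<ge>Nb. (t - u) / real (Suc N) < dm" using unif_small[OF ut' dm] by blast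
      define N where "N = max Na Nb"
      define p1 where "p1 = unif s u N"
      define p2 where "p2 = unif u t N"
      define p where "p i = (if i \<le> Suc N then p1 i else p2 (i - Suc N))" for i
      have g1: "\<forall>i<Suc N. p1 (Suc i) - p1 i < dm" unfolding p1_def using unif_gap Na N_def by simp
      have g2: "\<forall>i<Suc N. p2 (Suc i) - p2 i < dm" unfolding p2_def using unif_gap Nb N_def by simp
      have P1: "partition_of p1 (Suc N) s u" unfolding p1_def by (rule unif_part[OF su'])
      have P2: "partition_of p2 (Suc N) u t" unfolding p2_def by (rule unif_part[OF ut'])
      have P: "partition_of p (Suc N + Suc N) s t"
        unfolding partition_of_def
      proof (intro conjI allI impI)
        show "p 0 = s" using P1 unfolding p_def partition_of_def by simp
        show "p (Suc N + Suc N) = t" using P2 unfolding p_def partition_of_def by simp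
        fix i assume i: "i < Suc N + Suc N"
        consider "Suc i \<le> Suc N" | "i = Suc N" | "Suc N < i" by linarith
        then show "p i < p (Suc i)"
        proof cases
          case 1 then show ?thesis using P1 unfolding p_def partition_of_def by auto
        next
          case 2 then show ?thesis using P1 P2 unfolding p_def partition_of_def by auto
        next
          case 3 then have "Suc i - Suc N = Suc (i - Suc N)" by auto
          then show ?thesis using P2 3 i unfolding p_def partition_of_def by auto
        qed
      qed
      have gp: "\<forall>i<Suc N + Suc N. p (Suc i) - p i < dm"
      proof (intro allI impI)
        fix i assume i: "i < Suc N + Suc N"
        consider "Suc i \<le> Suc N" | "i = Suc N" | "Suc N < i" by linarith
        then show "p (Suc i) - p i < dm"
        proof cases
          case 1 then show ?thesis using g1 unfolding p_def by auto
        next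
          case 2 then show ?thesis using g2 P1 P2 unfolding p_def partition_of_def by auto
        next
          case 3 then have "Suc i - Suc N = Suc (i - Suc N)" by auto
          then show ?thesis using g2 3 i unfolding p_def by auto
        qed
      qed
      have split: "psum G p (Suc N + Suc N) = psum G p1 (Suc N) + psum G p2 (Suc N)"
      proof -
        have "psum G p (Suc N + Suc N) = psum G p (Suc N) + psum G (\<lambda>i. p (Suc N + i)) (Suc N)"
          using psum_split[of "Suc N" "Suc N + Suc N" G p] by simp
        moreover have "psum G p (Suc N) = psum G p1 (Suc N)" by (rule psum_cong) (simp add: p_def)
        moreover have "psum G (\<lambda>i. p (Suc N + i)) (Suc N) = psum G p2 (Suc N)"
          by (rule psum_cong) (use P1 P2 in \<open>auto simp: p_def partition_of_def\<close>)
        ultimately show ?thesis by simp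
      qed
      have a1: "norm (psum G p (Suc N + Suc N) - I) < \<epsilon>" using d(2) P gp dm_def by auto
      have a2: "norm (psum G p1 (Suc N) - I1) < \<epsilon>" using d1(2) P1 g1 dm_def by auto
      have a3: "norm (psum G p2 (Suc N) - I2) < \<epsilon>" using d2(2) P2 g2 dm_def by auto
      have eq: "I - (I1 + I2) = ((psum G p1 (Suc N) - I1) + (psum G p2 (Suc N) - I2)) - (psum G p (Suc N + Suc N) - I)"
        using split by (simp add: algebra_simps)
      have "norm (I - (I1 + I2)) \<le> norm ((psum G p1 (Suc N) - I1) + (psum G p2 (Suc N) - I2)) + norm (psum G p (Suc N + Suc N) - I)"
        unfolding eq by (rule norm_triangle_ineq4)
      moreover have "norm ((psum G p1 (Suc N) - I1) + (psum G p2 (Suc N) - I2)) \<le> norm (psum G p1 (Suc N) - I1) + norm (psum G p2 (Suc N) - I2)"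
        by (rule norm_triangle_ineq)
      ultimately show ?thesis using a1 a2 a3 by linarith
    qed
    note h = this
    have "norm (I - (I1 + I2)) \<le> 0 + e" if "e > 0" for e
      using h[of "e/3"] that by simp
    then have "norm (I - (I1 + I2)) \<le> 0" by (rule field_le_epsilon)
    then show ?thesis by simp
  qed
qed

definition hb :: "(real \<Rightarrow> 'a::real_normed_vector) \<Rightarrow> real \<Rightarrow> real \<Rightarrow> real \<Rightarrow> real \<Rightarrow> bool" where
  "hb x a b \<gamma> M \<longleftrightarrow> (\<forall>u v. a \<le> u \<longrightarrow> u \<le> v \<longrightarrow> v \<le> b \<longrightarrow> norm (x v - x u) \<le> M * (v - u) powr \<gamma>)"

lemma hbD: "hb x a b \<gamma> M \<Longrightarrow> a \<le> u \<Longrightarrow> u \<le> v \<Longrightarrow> v \<le> b \<Longrightarrow> norm (x v - x u) \<le> M * (v - u) powr \<gamma>"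
  unfolding hb_def by blast

lemma hb_mono: "hb x a b \<gamma> M \<Longrightarrow> M \<le> M' \<Longrightarrow> hb x a b \<gamma> M'"
  unfolding hb_def
proof (intro allI impI)
  fix u v assume h: "\<forall>u v. a \<le> u \<longrightarrow> u \<le> v \<longrightarrow> v \<le> b \<longrightarrow> norm (x v - x u) \<le> M * (v - u) powr \<gamma>"
    and M: "M \<le> M'" and uv: "a \<le> u" "u \<le> v" "v \<le> b"
  have "norm (x v - x u) \<le> M * (v - u) powr \<gamma>" using h uv by blast
  also have "\<dots> \<le> M' * (v - u) powr \<gamma>" using M by (intro mult_right_mono) auto
  finally show "norm (x v - x u) \<le> M' * (v - u) powr \<gamma>" .
qed

lemma hb_add: "hb x a b \<gamma> M1 \<Longrightarrow> hb y a b \<gamma> M2 \<Longrightarrow> hb (\<lambda>r. x r + y r) a b \<gamma> (M1 + M2)"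
  unfolding hb_def
proof (intro allI impI)
  fix u v assume h: "\<forall>u v. a \<le> u \<longrightarrow> u \<le> v \<longrightarrow> v \<le> b \<longrightarrow> norm (x v - x u) \<le> M1 * (v - u) powr \<gamma>"
    "\<forall>u v. a \<le> u \<longrightarrow> u \<le> v \<longrightarrow> v \<le> b \<longrightarrow> norm (y v - y u) \<le> M2 * (v - u) powr \<gamma>"
    and uv: "a \<le> u" "u \<le> v" "v \<le> b"
  have e: "x v + y v - (x u + y u) = (x v - x u) + (y v - y u)" by (simp add: algebra_simps)
  have "norm (x v + y v - (x u + y u)) \<le> norm (x v - x u) + norm (y v - y u)"
    unfolding e by (rule norm_triangle_ineq)
  moreover have "norm (x v - x u) \<le> M1 * (v - u) powr \<gamma>" "norm (y v - y u) \<le> M2 * (v - u) powr \<gamma>"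
    using h uv by blast+
  ultimately show "norm (x v + y v - (x u + y u)) \<le> (M1 + M2) * (v - u) powr \<gamma>"
    unfolding distrib_right by linarith
qed

lemma hb_diff: "hb x a b \<gamma> M1 \<Longrightarrow> hb y a b \<gamma> M2 \<Longrightarrow> hb (\<lambda>r. x r - y r) a b \<gamma> (M1 + M2)"
  unfolding hb_def
proof (intro allI impI)
  fix u v assume h: "\<forall>u v. a \<le> u \<longrightarrow> u \<le> v \<longrightarrow> v \<le> b \<longrightarrow> norm (x v - x u) \<le> M1 * (v - u) powr \<gamma>"
    "\<forall>u v. a \<le> u \<longrightarrow> u \<le> v \<longrightarrow> v \<le> b \<longrightarrow> norm (y v - y u) \<le> M2 * (v - u) powr \<gamma>"
    and uv: "a \<le> u" "u \<le> v" "v \<le> b"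
  have e: "x v - y v - (x u - y u) = (x v - x u) - (y v - y u)" by (simp add: algebra_simps)
  have "norm (x v - y v - (x u - y u)) \<le> norm (x v - x u) + norm (y v - y u)"
    unfolding e by (rule norm_triangle_ineq4)
  moreover have "norm (x v - x u) \<le> M1 * (v - u) powr \<gamma>" "norm (y v - y u) \<le> M2 * (v - u) powr \<gamma>"
    using h uv by blast+
  ultimately show "norm (x v - y v - (x u - y u)) \<le> (M1 + M2) * (v - u) powr \<gamma>"
    unfolding distrib_right by linarith
qed

lemma hb_point: "hb w a b \<gamma> D \<Longrightarrow> w a = 0 \<Longrightarrow> a \<le> t \<Longrightarrow> t \<le> b \<Longrightarrow> \<gamma> \<ge> 0 \<Longrightarrow> D \<ge> 0 \<Longrightarrow>
   norm (w t) \<le> D * (b - a) powr \<gamma>"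
proof -
  assume h: "hb w a b \<gamma> D" "w a = 0" "a \<le> t" "t \<le> b" "\<gamma> \<ge> 0" "D \<ge> 0"
  have "norm (w t) \<le> D * (t - a) powr \<gamma>" using hbD[OF h(1), of a t] h by simp
  also have "\<dots> \<le> D * (b - a) powr \<gamma>" using h by (intro mult_left_mono powr_mono2) auto
  finally show ?thesis .
qed

lemma hb_limit:
  assumes lim: "\<And>t. a \<le> t \<Longrightarrow> t \<le> b \<Longrightarrow> (\<lambda>n. f n t) \<longlonglongrightarrow> g t"
    and ev: "\<And>n. n \<ge> N \<Longrightarrow> hb (f n) a b \<gamma> D"
  shows "hb g a b \<gamma> D"
  unfolding hb_def
proof (intro allI impI)
  fix u v assume uv: "a \<le> u" "u \<le> v" "v \<le> b"
  have "(\<lambda>n. norm (f n v - f n u)) \<longlonglongrightarrow> norm (g v - g u)"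
    using lim uv by (intro tendsto_intros) auto
  moreover have "eventually (\<lambda>n. norm (f n v - f n u) \<le> D * (v - u) powr \<gamma>) sequentially"
    unfolding eventually_sequentially using ev uv hbD by blast
  ultimately show "norm (g v - g u) \<le> D * (v - u) powr \<gamma>"
    by (rule tendsto_upperbound) simp
qed

lemma picard:
  fixes \<Phi> :: "(real \<Rightarrow> 'a::banach) \<Rightarrow> real \<Rightarrow> 'a"
  assumes ab: "a \<le> b" and M: "M \<ge> 0" and \<alpha>: "\<alpha> > 0"
    and Bdef: "Bset = {y. y a = \<xi> \<and> (\<forall>t. a \<le> t \<and> t \<le> b \<longrightarrow> norm (y t - \<xi>) \<le> 1) \<and> hb y a b \<alpha> M}"
    and inv: "\<And>y. y \<in> Bset \<Longrightarrow> \<Phi> y \<in> Bset"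
    and con: "\<And>y z D. y \<in> Bset \<Longrightarrow> z \<in> Bset \<Longrightarrow> D \<ge> 0 \<Longrightarrow> hb (\<lambda>r. y r - z r) a b \<alpha> D \<Longrightarrow>
                 hb (\<lambda>r. \<Phi> y r - \<Phi> z r) a b \<alpha> (D/2)"
  shows "\<exists>y\<in>Bset. \<forall>t. a \<le> t \<and> t \<le> b \<longrightarrow> \<Phi> y t = y t"
proof -
  define ys where "ys n = (\<Phi> ^^ n) (\<lambda>_. \<xi>)" for n
  have ysB: "ys n \<in> Bset" for n
  proof (induction n)
    case 0 then show ?case unfolding ys_def Bdef hb_def using M by simp
  next
    case (Suc n) then show ?case unfolding ys_def using inv by simp
  qed
  have ysS: "ys (Suc n) = \<Phi> (ys n)" for n unfolding ys_def by simp
  have Bfacts: "y a = \<xi>" "\<And>t. a \<le> t \<Longrightarrow> t \<le> b \<Longrightarrow> norm (y t - \<xi>) \<le> 1" "hb y a b \<alpha> M" if "y \<in> Bset" for y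
    using that unfolding Bdef by auto
  define Dn where "Dn n = 2 * M * (1/2) ^ n" for n
  have Dn0: "Dn n \<ge> 0" for n unfolding Dn_def using M by simp
  have hd: "hb (\<lambda>r. ys (Suc n) r - ys n r) a b \<alpha> (Dn n)" for n
  proof (induction n)
    case 0
    show ?case using hb_diff[OF Bfacts(3)[OF ysB] Bfacts(3)[OF ysB]] unfolding Dn_def by simp
  next
    case (Suc n)
    have "hb (\<lambda>r. \<Phi> (ys (Suc n)) r - \<Phi> (ys n) r) a b \<alpha> (Dn n / 2)"
      by (rule con[OF ysB ysB Dn0 Suc])
    then show ?case unfolding ysS[symmetric] Dn_def by simp
  qed
  have pd: "norm (ys (Suc n) t - ys n t) \<le> Dn n * (b - a) powr \<alpha>" if "a \<le> t" "t \<le> b" for n t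
    using hb_point[OF hd] Bfacts(1)[OF ysB] Bfacts(1)[OF ysB] that \<alpha> Dn0 by simp
  have conv: "convergent (\<lambda>n. ys n t)" if t: "a \<le> t" "t \<le> b" for t
  proof -
    have "summable (\<lambda>n. norm (ys (Suc n) t - ys n t))"
    proof (rule summable_comparison_test[where g = "\<lambda>n. 2 * M * (b - a) powr \<alpha> * (1/2) ^ n"])
      show "\<exists>N. \<forall>n\<ge>N. norm (norm (ys (Suc n) t - ys n t)) \<le> 2 * M * (b - a) powr \<alpha> * (1 / 2) ^ n"
        using pd[OF t] unfolding Dn_def by (auto simp: mult_ac)
      show "summable (\<lambda>n. 2 * M * (b - a) powr \<alpha> * (1 / 2) ^ n)"
        by (intro summable_mult summable_geometric) simp
    qed
    then have "summable (\<lambda>n. ys (Suc n) t - ys n t)" by (rule summable_norm_cancel)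
    then have "(\<lambda>n. \<Sum>i<n. ys (Suc i) t - ys i t) \<longlonglongrightarrow> suminf (\<lambda>n. ys (Suc n) t - ys n t)"
      by (rule summable_LIMSEQ)
    moreover have "(\<Sum>i<n. ys (Suc i) t - ys i t) = ys n t - ys 0 t" for n by (induction n) auto
    ultimately have "(\<lambda>n. ys n t - ys 0 t) \<longlonglongrightarrow> suminf (\<lambda>n. ys (Suc n) t - ys n t)"
      by simp
    then have "(\<lambda>n. ys n t - ys 0 t + ys 0 t) \<longlonglongrightarrow> suminf (\<lambda>n. ys (Suc n) t - ys n t) + ys 0 t"
      by (intro tendsto_intros)
    then show ?thesis unfolding convergent_def by auto
  qed
  define y where "y t = lim (\<lambda>n. ys n t)" for t
  have ylim: "(\<lambda>n. ys n t) \<longlonglongrightarrow> y t" if "a \<le> t" "t \<le> b" for t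
    using conv[OF that] unfolding y_def by (simp add: convergent_LIMSEQ_iff)
  have hmn: "hb (\<lambda>r. ys (n + k) r - ys n r) a b \<alpha> (4 * M * (1/2)^n - 4 * M * (1/2)^(n+k))" for n k
  proof (induction k)
    case 0 then show ?case unfolding hb_def by simp
  next
    case (Suc k)
    have "hb (\<lambda>r. (ys (Suc (n + k)) r - ys (n + k) r) + (ys (n + k) r - ys n r)) a b \<alpha>
        (Dn (n + k) + (4 * M * (1/2)^n - 4 * M * (1/2)^(n+k)))"
      by (rule hb_add[OF hd Suc])
    moreover have "Dn (n + k) + (4 * M * (1/2)^n - 4 * M * (1/2)^(n+k)) = 4 * M * (1/2)^n - 4 * M * (1/2)^(n + Suc k)"
      unfolding Dn_def by (simp add: field_simps)
    ultimately show ?case by simp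
  qed
  have hmn': "hb (\<lambda>r. ys m r - ys n r) a b \<alpha> (4 * M * (1/2)^n)" if mn: "m \<ge> n" for m n
  proof -
    from mn obtain k where "m = n + k" by (auto simp: le_iff_add)
    then show ?thesis using hb_mono[OF hmn[of n k]] M by simp
  qed
  have hyn: "hb (\<lambda>r. y r - ys n r) a b \<alpha> (4 * M * (1/2)^n)" for n
    by (rule hb_limit[where N = n, OF _ hmn']) (use ylim in \<open>auto intro!: tendsto_intros\<close>)
  have yB: "y \<in> Bset"
  proof -
    have "(\<lambda>n. ys n a) = (\<lambda>n. \<xi>)" using Bfacts(1)[OF ysB] by simp
    then have "(\<lambda>n. \<xi>) \<longlonglongrightarrow> y a" using ylim[of a] ab by simp
    then have "y a = \<xi>" using LIMSEQ_unique tendsto_const by blast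
    moreover have "norm (y t - \<xi>) \<le> 1" if "a \<le> t" "t \<le> b" for t
    proof -
      have "(\<lambda>n. norm (ys n t - \<xi>)) \<longlonglongrightarrow> norm (y t - \<xi>)" using ylim[OF that] by (intro tendsto_intros)
      then show ?thesis by (rule tendsto_upperbound) (use Bfacts(2)[OF ysB] that in auto)
    qed
    moreover have "hb y a b \<alpha> M" by (rule hb_limit[where N = 0, OF ylim]) (use Bfacts(3)[OF ysB] in auto)
    ultimately show ?thesis unfolding Bdef by auto
  qed
  have fixpt: "\<Phi> y t = y t" if t: "a \<le> t" "t \<le> b" for t
  proof -
    have h: "hb (\<lambda>r. \<Phi> y r - ys (Suc n) r) a b \<alpha> (2 * M * (1/2)^n)" for n
      using con[OF yB ysB _ hyn, of n] M unfolding ysS by (simp add: mult.assoc)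
    have e: "\<Phi> y a - ys (Suc n) a = 0" for n using Bfacts(1)[OF inv[OF yB]] Bfacts(1)[OF ysB] by simp
    have b: "norm (\<Phi> y t - ys (Suc n) t) \<le> 2 * M * (b - a) powr \<alpha> * (1/2)^n" for n
      using hb_point[OF h e t] \<alpha> M by (simp add: mult_ac)
    have z: "(\<lambda>n. 2 * M * (b - a) powr \<alpha> * (1/2)^n) \<longlonglongrightarrow> 0"
      by (intro tendsto_mult_right_zero LIMSEQ_power_zero) simp
    have "(\<lambda>n. \<Phi> y t - ys (Suc n) t) \<longlonglongrightarrow> 0"
      by (rule Lim_null_comparison[OF _ z]) (use b in auto)
    moreover have "(\<lambda>n. \<Phi> y t - ys (Suc n) t) \<longlonglongrightarrow> \<Phi> y t - y t"
      using ylim[OF t] by (intro tendsto_intros) (rule LIMSEQ_Suc)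
    ultimately show ?thesis using LIMSEQ_unique by force
  qed
  show ?thesis using yB fixpt by blast
qed

locale nyde =
  fixes T \<alpha> \<beta> :: real and A :: "real \<Rightarrow> 'v::banach \<Rightarrow> 'v" and DA :: "real \<Rightarrow> 'v \<Rightarrow> ('v \<Rightarrow>\<^sub>L 'v)"
  assumes T: "T > 0" and al: "0 < \<alpha>" "\<alpha> < 1" and be: "0 < \<beta>" "\<beta> < 1" and ab: "\<alpha> * (1 + \<beta>) > 1"
    and Ah: "loc_holder_field T \<alpha> \<beta> A"
    and Dd: "\<forall>t\<in>{0..T}. \<forall>x. (A t has_derivative blinfun_apply (DA t x)) (at x)"
    and Dh: "loc_holder_field T \<alpha> \<beta> DA"
begin

definition goodC :: "real \<Rightarrow> real \<Rightarrow> bool" where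
  "goodC R C \<longleftrightarrow> C > 0 \<and> (\<forall>s t. 0 \<le> s \<and> s \<le> t \<and> t \<le> T \<longrightarrow>
     (\<forall>x. norm x \<le> R \<longrightarrow> norm (A t x - A s x) \<le> C * (t - s) powr \<alpha> \<and> norm (DA t x - DA s x) \<le> C * (t - s) powr \<alpha>) \<and>
     (\<forall>x y. norm x \<le> R \<and> norm y \<le> R \<longrightarrow>
        norm ((A t x - A s x) - (A t y - A s y)) \<le> C * (t - s) powr \<alpha> * norm (x - y) powr \<beta> \<and>
        norm ((DA t x - DA s x) - (DA t y - DA s y)) \<le> C * (t - s) powr \<alpha> * norm (x - y) powr \<beta>))"

lemma goodC_ex: assumes R: "R > 0" shows "\<exists>C. goodC R C"
proof -
  obtain C1 where C1: "\<forall>s t. 0 \<le> s \<and> s < t \<and> t \<le> T \<longrightarrow>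
        (\<forall>x. norm x \<le> R \<longrightarrow> norm (A t x - A s x) \<le> C1 * (t - s) powr \<alpha>) \<and>
        (\<forall>x y. norm x \<le> R \<and> norm y \<le> R \<and> x \<noteq> y \<longrightarrow>
           norm ((A t x - A s x) - (A t y - A s y)) \<le> C1 * (t - s) powr \<alpha> * norm (x - y) powr \<beta>)"
    using Ah R unfolding loc_holder_field_def by blast
  obtain C2 where C2: "\<forall>s t. 0 \<le> s \<and> s < t \<and> t \<le> T \<longrightarrow>
        (\<forall>x. norm x \<le> R \<longrightarrow> norm (DA t x - DA s x) \<le> C2 * (t - s) powr \<alpha>) \<and>
        (\<forall>x y. norm x \<le> R \<and> norm y \<le> R \<and> x \<noteq> y \<longrightarrow>
           norm ((DA t x - DA s x) - (DA t y - DA s y)) \<le> C2 * (t - s) powr \<alpha> * norm (x - y) powr \<beta>)"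
    using Dh R unfolding loc_holder_field_def by blast
  define C where "C = max (max C1 C2) 1"
  have CC: "C1 \<le> C" "C2 \<le> C" "C > 0" unfolding C_def by auto
  have mono1: "c * (t - s) powr \<alpha> \<le> C * (t - s) powr \<alpha>" if "c \<le> C" for c s t
    using that by (intro mult_right_mono) auto
  have mono2: "c * (t - s) powr \<alpha> * z powr \<beta> \<le> C * (t - s) powr \<alpha> * z powr \<beta>" if "c \<le> C" for c s t z
    using that by (intro mult_right_mono) auto
  have nn: "0 \<le> C * (t - s) powr \<alpha> * z powr \<beta>" "0 \<le> C * (t - s) powr \<alpha>" for s t z
    using CC by auto
  show ?thesis unfolding goodC_def
  proof (intro exI[of _ C] conjI allI impI)
    show "C > 0" by fact
    fix s t :: real
    assume st: "0 \<le> s \<and> s \<le> t \<and> t \<le> T"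
    {
      fix x :: 'v assume x: "norm x \<le> R"
      show "norm (A t x - A s x) \<le> C * (t - s) powr \<alpha>"
      proof (cases "s = t")
        case True then show ?thesis using nn by simp
      next
        case False
        then have "0 \<le> s \<and> s < t \<and> t \<le> T" using st by auto
        then have "norm (A t x - A s x) \<le> C1 * (t - s) powr \<alpha>" using C1 x by blast
        then show ?thesis using mono1[OF CC(1), of t s] by (rule order_trans)
      qed
      show "norm (DA t x - DA s x) \<le> C * (t - s) powr \<alpha>"
      proof (cases "s = t")
        case True then show ?thesis using nn by simp
      next
        case False
        then have "0 \<le> s \<and> s < t \<and> t \<le> T" using st by auto
        then have "norm (DA t x - DA s x) \<le> C2 * (t - s) powr \<alpha>" using C2 x by blast
        then show ?thesis using mono1[OF CC(2), of t s] by (rule order_trans)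
      qed
    }
    fix x y :: 'v assume xy: "norm x \<le> R \<and> norm y \<le> R"
    show "norm ((A t x - A s x) - (A t y - A s y)) \<le> C * (t - s) powr \<alpha> * norm (x - y) powr \<beta>"
    proof (cases "s = t \<or> x = y")
      case True then show ?thesis using nn by (auto simp del: norm_le_zero_iff)
    next
      case False
      then have "0 \<le> s \<and> s < t \<and> t \<le> T" "x \<noteq> y" using st by auto
      then have "norm ((A t x - A s x) - (A t y - A s y)) \<le> C1 * (t - s) powr \<alpha> * norm (x - y) powr \<beta>"
        using C1 xy by blast
      then show ?thesis using mono2[OF CC(1)] by (rule order_trans)
    qed
    show "norm ((DA t x - DA s x) - (DA t y - DA s y)) \<le> C * (t - s) powr \<alpha> * norm (x - y) powr \<beta>"
    proof (cases "s = t \<or> x = y")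
      case True then show ?thesis using nn by (auto simp del: norm_le_zero_iff)
    next
      case False
      then have "0 \<le> s \<and> s < t \<and> t \<le> T" "x \<noteq> y" using st by auto
      then have "norm ((DA t x - DA s x) - (DA t y - DA s y)) \<le> C2 * (t - s) powr \<alpha> * norm (x - y) powr \<beta>"
        using C2 xy by blast
      then show ?thesis using mono2[OF CC(2)] by (rule order_trans)
    qed
  qed
qed

definition CC :: "real \<Rightarrow> real" where "CC R = (SOME C. goodC R C)"

lemma CC: "R > 0 \<Longrightarrow> goodC R (CC R)"
  unfolding CC_def using goodC_ex someI_ex by metis

lemma goodC_pos: "goodC R C \<Longrightarrow> C > 0" unfolding goodC_def by simp

lemma goodC_A: "goodC R C \<Longrightarrow> 0 \<le> s \<Longrightarrow> s \<le> t \<Longrightarrow> t \<le> T \<Longrightarrow> norm x \<le> R \<Longrightarrow>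
   norm (A t x - A s x) \<le> C * (t - s) powr \<alpha>"
  unfolding goodC_def by blast

lemma goodC_DA: "goodC R C \<Longrightarrow> 0 \<le> s \<Longrightarrow> s \<le> t \<Longrightarrow> t \<le> T \<Longrightarrow> norm x \<le> R \<Longrightarrow>
   norm (DA t x - DA s x) \<le> C * (t - s) powr \<alpha>"
  unfolding goodC_def by blast

lemma goodC_Ah: "goodC R C \<Longrightarrow> 0 \<le> s \<Longrightarrow> s \<le> t \<Longrightarrow> t \<le> T \<Longrightarrow> norm x \<le> R \<Longrightarrow> norm y \<le> R \<Longrightarrow>
   norm ((A t x - A s x) - (A t y - A s y)) \<le> C * (t - s) powr \<alpha> * norm (x - y) powr \<beta>"
  unfolding goodC_def by blast

lemma goodC_DAh: "goodC R C \<Longrightarrow> 0 \<le> s \<Longrightarrow> s \<le> t \<Longrightarrow> t \<le> T \<Longrightarrow> norm x \<le> R \<Longrightarrow> norm y \<le> R \<Longrightarrow>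
   norm ((DA t x - DA s x) - (DA t y - DA s y)) \<le> C * (t - s) powr \<alpha> * norm (x - y) powr \<beta>"
  unfolding goodC_def by blast

lemma goodC_lip:
  assumes C: "goodC R C" and st: "0 \<le> s" "s \<le> t" "t \<le> T" and xy: "norm x \<le> R" "norm y \<le> R"
  shows "norm ((A t x - A s x) - (A t y - A s y)) \<le> C * (t - s) powr \<alpha> * norm (x - y)"
proof -
  have der: "((\<lambda>z. A t z - A s z) has_derivative blinfun_apply (DA t z - DA s z)) (at z within cball 0 R)" for z
  proof -
    have "((\<lambda>z. A t z - A s z) has_derivative (\<lambda>h. blinfun_apply (DA t z) h - blinfun_apply (DA s z) h)) (at z)"
      using Dd st by (intro has_derivative_diff) auto
    then show ?thesis unfolding minus_blinfun.rep_eq fun_diff_def by (rule has_derivative_at_withinI)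
  qed
  have bnd: "onorm (blinfun_apply (DA t z - DA s z)) \<le> C * (t - s) powr \<alpha>" if "z \<in> cball 0 R" for z
    using goodC_DA[OF C st, of z] that unfolding norm_blinfun.rep_eq[symmetric] by simp
  have "norm ((A t x - A s x) - (A t y - A s y)) \<le> C * (t - s) powr \<alpha> * norm (x - y)"
    by (rule differentiable_bound[OF convex_cball der bnd]) (use xy in auto)
  then show ?thesis .
qed

end

lemma pw_comb:
  fixes s u t :: real
  assumes "s \<le> u" "u \<le> t" "a \<ge> 0" "e \<ge> 0"
  shows "(t - u) powr a * (u - s) powr e \<le> (t - s) powr (a + e)"
proof -
  have "(t - u) powr a \<le> (t - s) powr a" using assms by (intro powr_mono2) auto
  moreover have "(u - s) powr e \<le> (t - s) powr e" using assms by (intro powr_mono2) auto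
  ultimately have "(t - u) powr a * (u - s) powr e \<le> (t - s) powr a * (t - s) powr e"
    by (intro mult_mono) auto
  also have "\<dots> = (t - s) powr (a + e)" by (simp add: powr_add)
  finally show ?thesis .
qed

context nyde begin

lemma goodC_second:
  assumes C: "goodC R3 C" and R3: "3 * R \<le> R3" and st: "0 \<le> s" "s \<le> t" "t \<le> T"
    and n: "norm x1 \<le> R" "norm x2 \<le> R" "norm y1 \<le> R" "norm y2 \<le> R"
  shows "norm ((A t x1 - A s x1) - (A t x2 - A s x2) - ((A t y1 - A s y1) - (A t y2 - A s y2)))
     \<le> C * (t - s) powr \<alpha> * (norm ((x1 - x2) - (y1 - y2)) + norm (x1 - x2) powr \<beta> * norm (x2 - y2))"
proof -
  define f where "f z = A t z - A s z" for z
  define a where "a = x1 - x2"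
  define g where "g z = f (z + a) - f z" for z
  have "0 \<le> norm x1" by simp
  then have R0: "R \<ge> 0" using n(1) by linarith
  have fder: "(f has_derivative blinfun_apply (DA t z - DA s z)) (at z)" for z
  proof -
    have "(f has_derivative (\<lambda>h. blinfun_apply (DA t z) h - blinfun_apply (DA s z) h)) (at z)"
      unfolding f_def using Dd st by (intro has_derivative_diff) auto
    then show ?thesis unfolding minus_blinfun.rep_eq fun_diff_def .
  qed
  have gder: "(g has_derivative blinfun_apply ((DA t (z + a) - DA s (z + a)) - (DA t z - DA s z))) (at z within cball 0 R)" for z
  proof -
    have d1: "((\<lambda>z. f (z + a)) has_derivative blinfun_apply (DA t (z + a) - DA s (z + a))) (at z)"
      using has_derivative_compose[OF has_derivative_add_const[OF has_derivative_ident] fder[of "z + a"]]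
      by simp
    have "(g has_derivative (\<lambda>h. blinfun_apply (DA t (z + a) - DA s (z + a)) h - blinfun_apply (DA t z - DA s z) h)) (at z)"
      unfolding g_def by (intro has_derivative_diff d1 fder)
    moreover have "blinfun_apply ((DA t (z + a) - DA s (z + a)) - (DA t z - DA s z)) =
        (\<lambda>h. blinfun_apply (DA t (z + a) - DA s (z + a)) h - blinfun_apply (DA t z - DA s z) h)"
      by (rule ext) (simp only: blinfun.diff_left)
    ultimately show ?thesis by (simp only:) (rule has_derivative_at_withinI)
  qed
  have gbnd: "onorm (blinfun_apply ((DA t (z + a) - DA s (z + a)) - (DA t z - DA s z))) \<le> C * (t - s) powr \<alpha> * norm a powr \<beta>"
    if z: "z \<in> cball 0 R" for z
  proof -
    have nz: "norm z \<le> R" using z by simp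
    have "norm (z + a) \<le> norm z + norm a" by (rule norm_triangle_ineq)
    moreover have "norm a \<le> norm x1 + norm x2" unfolding a_def by (rule norm_triangle_ineq4)
    ultimately have "norm (z + a) \<le> R3" using nz n R3 by linarith
    moreover have "norm z \<le> R3" using nz R3 R0 by linarith
    ultimately have "norm ((DA t (z + a) - DA s (z + a)) - (DA t z - DA s z)) \<le> C * (t - s) powr \<alpha> * norm (z + a - z) powr \<beta>"
      by (rule goodC_DAh[OF C st])
    then show ?thesis unfolding norm_blinfun.rep_eq[symmetric] by simp
  qed
  have x2c: "x2 \<in> cball 0 R" "y2 \<in> cball 0 R" using n by auto
  have G: "norm (g x2 - g y2) \<le> C * (t - s) powr \<alpha> * norm a powr \<beta> * norm (x2 - y2)"
    by (rule differentiable_bound[OF convex_cball gder gbnd x2c])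
  have ny2a: "norm (y2 + a) \<le> R3"
  proof -
    have "norm (y2 + a) \<le> norm y2 + norm a" by (rule norm_triangle_ineq)
    moreover have "norm a \<le> norm x1 + norm x2" unfolding a_def by (rule norm_triangle_ineq4)
    ultimately show ?thesis using n R3 by linarith
  qed
  have ny1: "norm y1 \<le> R3" using n R3 R0 by linarith
  have L: "norm (f (y2 + a) - f y1) \<le> C * (t - s) powr \<alpha> * norm (y2 + a - y1)"
    unfolding f_def by (rule goodC_lip[OF C st ny2a ny1])
  have e1: "y2 + a - y1 = (x1 - x2) - (y1 - y2)" unfolding a_def by (simp add: algebra_simps)
  have e2: "(A t x1 - A s x1) - (A t x2 - A s x2) - ((A t y1 - A s y1) - (A t y2 - A s y2))
      = (g x2 - g y2) + (f (y2 + a) - f y1)"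
    unfolding g_def f_def a_def by (simp add: algebra_simps)
  have "norm ((A t x1 - A s x1) - (A t x2 - A s x2) - ((A t y1 - A s y1) - (A t y2 - A s y2)))
      \<le> norm (g x2 - g y2) + norm (f (y2 + a) - f y1)"
    unfolding e2 by (rule norm_triangle_ineq)
  also have "\<dots> \<le> C * (t - s) powr \<alpha> * norm a powr \<beta> * norm (x2 - y2) + C * (t - s) powr \<alpha> * norm ((x1 - x2) - (y1 - y2))"
    using G L unfolding e1 by linarith
  finally show ?thesis unfolding a_def by (simp add: algebra_simps)
qed

definition yint :: "(real \<Rightarrow> 'v) \<Rightarrow> real \<Rightarrow> real \<Rightarrow> 'v" where
  "yint x s t = (THE I. sew_conv (gam A x) s t I)"

lemma yint_eq: "s \<le> t \<Longrightarrow> sew_conv (gam A x) s t I \<Longrightarrow> yint x s t = I"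
  unfolding yint_def by (rule the_equality) (auto intro: sew_unique)

lemma delta_gam: "gam A x s t - gam A x s u - gam A x u t = (A t (x s) - A u (x s)) - (A t (x u) - A u (x u))"
  unfolding gam_def by (simp add: algebra_simps)

lemma gam_delta_bound:
  assumes C: "goodC R C" and ab: "0 \<le> a" "b \<le> T" and xb: "\<And>r. a \<le> r \<Longrightarrow> r \<le> b \<Longrightarrow> norm (x r) \<le> R"
    and hx: "hb x a b \<gamma> M" and M: "M \<ge> 0" and \<gamma>: "\<gamma> > 0"
    and su: "a \<le> s" "s \<le> u" "u \<le> t" "t \<le> b"
  shows "norm (gam A x s t - gam A x s u - gam A x u t) \<le> C * M powr \<beta> * (t - s) powr (\<alpha> + \<beta> * \<gamma>)"
proof -
  have C0: "C > 0" using goodC_pos[OF C] .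
  define N where "N = norm (x s - x u)"
  have h1: "norm (gam A x s t - gam A x s u - gam A x u t) \<le> C * (t - u) powr \<alpha> * N powr \<beta>"
    unfolding delta_gam N_def using goodC_Ah[OF C _ su(3) _ xb xb] ab su by auto
  have "N powr \<beta> \<le> (M * (u - s) powr \<gamma>) powr \<beta>"
    unfolding N_def using hbD[OF hx su(1,2)] su be by (intro powr_mono2) (auto simp: norm_minus_commute)
  also have "(M * (u - s) powr \<gamma>) powr \<beta> = M powr \<beta> * (u - s) powr (\<beta> * \<gamma>)"
    using M su by (simp add: powr_mult powr_powr mult.commute)
  finally have h2: "N powr \<beta> \<le> M powr \<beta> * (u - s) powr (\<beta> * \<gamma>)" .
  have h3: "(t - u) powr \<alpha> * (M powr \<beta> * (u - s) powr (\<beta> * \<gamma>)) \<le> M powr \<beta> * (t - s) powr (\<alpha> + \<beta> * \<gamma>)"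
  proof -
    have "(t - u) powr \<alpha> * (M powr \<beta> * (u - s) powr (\<beta> * \<gamma>)) = M powr \<beta> * ((t - u) powr \<alpha> * (u - s) powr (\<beta> * \<gamma>))"
      by (simp add: mult_ac)
    also have "\<dots> \<le> M powr \<beta> * (t - s) powr (\<alpha> + \<beta> * \<gamma>)"
      using pw_comb[of s u t \<alpha> "\<beta> * \<gamma>"] su al be \<gamma> by (intro mult_left_mono) auto
    finally show ?thesis .
  qed
  have "C * (t - u) powr \<alpha> * N powr \<beta> \<le> C * (t - u) powr \<alpha> * (M powr \<beta> * (u - s) powr (\<beta> * \<gamma>))"
    using h2 C0 by (intro mult_left_mono) auto
  also have "\<dots> = C * ((t - u) powr \<alpha> * (M powr \<beta> * (u - s) powr (\<beta> * \<gamma>)))" by (simp add: mult_ac)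
  also have "\<dots> \<le> C * (M powr \<beta> * (t - s) powr (\<alpha> + \<beta> * \<gamma>))"
    using h3 C0 by (intro mult_left_mono) auto
  finally show ?thesis using h1 by (simp add: mult_ac)
qed

lemma yi_exists:
  assumes C: "goodC R C" and ab: "0 \<le> a" "b \<le> T" and xb: "\<And>r. a \<le> r \<Longrightarrow> r \<le> b \<Longrightarrow> norm (x r) \<le> R"
    and hx: "hb x a b \<gamma> M" and M: "M \<ge> 0" and \<gamma>: "\<gamma> > 0" and th: "\<alpha> + \<beta> * \<gamma> > 1"
    and st: "a \<le> s" "s \<le> t" "t \<le> b"
  shows "sew_conv (gam A x) s t (yint x s t) \<and>
    norm (yint x s t - gam A x s t) \<le> csew (\<alpha> + \<beta> * \<gamma>) * (C * M powr \<beta>) * (t - s) powr (\<alpha> + \<beta> * \<gamma>)"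
proof -
  have K: "C * M powr \<beta> \<ge> 0" using goodC_pos[OF C] by simp
  obtain I where I: "sew_conv (gam A x) s t I"
      "norm (I - gam A x s t) \<le> csew (\<alpha> + \<beta> * \<gamma>) * (C * M powr \<beta>) * (t - s) powr (\<alpha> + \<beta> * \<gamma>)"
    using sew_exists[OF th K gam_delta_bound[OF C ab xb hx M \<gamma>] st] by blast
  moreover have "yint x s t = I" using yint_eq[OF st(2) I(1)] .
  ultimately show ?thesis by simp
qed

end

lemma hb_sub: "hb x a b \<gamma> M \<Longrightarrow> a \<le> a' \<Longrightarrow> b' \<le> b \<Longrightarrow> hb x a' b' \<gamma> M"
  unfolding hb_def by auto

lemma small_pow:
  fixes c e B :: real
  assumes e: "e > 0" and c: "c \<ge> 0" and B: "B > 0"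
  shows "\<exists>h>0. \<forall>h'. 0 \<le> h' \<and> h' \<le> h \<longrightarrow> c * h' powr e \<le> B"
proof -
  define h where "h = (B / (c + 1)) powr (1 / e)"
  have hp: "h > 0" unfolding h_def using B c by simp
  have he: "h powr e = B / (c + 1)" unfolding h_def using e B c by (simp add: powr_powr)
  show ?thesis
  proof (intro exI[of _ h] conjI allI impI)
    show "h > 0" by fact
    fix h' assume h': "0 \<le> h' \<and> h' \<le> h"
    have "h' powr e \<le> h powr e" using h' e by (intro powr_mono2) auto
    then have "c * h' powr e \<le> c * (B / (c + 1))" using c he by (intro mult_left_mono) auto
    also have "\<dots> \<le> B" using c B by (simp add: field_simps)
    finally show "c * h' powr e \<le> B" .
  qed
qed

context nyde begin

abbreviation "th \<equiv> \<alpha> + \<beta> * \<alpha>"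

lemma th_gt: "th > 1" using ab by (simp add: algebra_simps)

lemma goodC_mono: "goodC R C \<Longrightarrow> R' \<le> R \<Longrightarrow> goodC R' C"
  unfolding goodC_def by (meson order_trans)

lemma yint_zero: "yint x s s = 0"
  by (rule yint_eq[OF order.refl sew_conv_triv])

lemma yint_add:
  assumes C: "goodC R C" and ab: "0 \<le> a" "b \<le> T" and xb: "\<And>r. a \<le> r \<Longrightarrow> r \<le> b \<Longrightarrow> norm (x r) \<le> R"
    and hx: "hb x a b \<gamma> M" and M: "M \<ge> 0" and \<gamma>: "\<gamma> > 0" and thg: "\<alpha> + \<beta> * \<gamma> > 1"
    and st: "a \<le> s" "s \<le> u" "u \<le> t" "t \<le> b"
  shows "yint x s t = yint x s u + yint x u t"
proof -
  have "sew_conv (gam A x) s t (yint x s t)" using yi_exists[OF C ab xb hx M \<gamma> thg, of s t] st by auto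
  moreover have "sew_conv (gam A x) s u (yint x s u)" using yi_exists[OF C ab xb hx M \<gamma> thg, of s u] st by auto
  moreover have "sew_conv (gam A x) u t (yint x u t)" using yi_exists[OF C ab xb hx M \<gamma> thg, of u t] st by auto
  ultimately show ?thesis using sew_add[OF st(2,3)] by blast
qed

lemma yint_bnd:
  assumes C: "goodC R C" and ab: "0 \<le> a" "b \<le> T" and xb: "\<And>r. a \<le> r \<Longrightarrow> r \<le> b \<Longrightarrow> norm (x r) \<le> R"
    and hx: "hb x a b \<alpha> M" and M: "M \<ge> 0"
    and st: "a \<le> s" "s \<le> t" "t \<le> b"
  shows "norm (yint x s t) \<le> C * (t - s) powr \<alpha> + csew th * (C * M powr \<beta>) * (t - s) powr th"
proof -
  have "norm (yint x s t - gam A x s t) \<le> csew th * (C * M powr \<beta>) * (t - s) powr th"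
    using yi_exists[OF C ab xb hx M al(1) th_gt st] by simp
  moreover have "norm (gam A x s t) \<le> C * (t - s) powr \<alpha>"
    unfolding gam_def using goodC_A[OF C _ st(2)] ab st xb[of s] by auto
  moreover have "norm (yint x s t) \<le> norm (yint x s t - gam A x s t) + norm (gam A x s t)"
    using norm_triangle_ineq[of "yint x s t - gam A x s t" "gam A x s t"] by simp
  ultimately show ?thesis by linarith
qed

end

context nyde begin

lemma ydiff:
  assumes C: "goodC (3 * R) C" and abT: "0 \<le> a" "a \<le> b" "b \<le> T" and h: "b - a \<le> h" "h \<le> 1"
    and xb: "\<And>r. a \<le> r \<Longrightarrow> r \<le> b \<Longrightarrow> norm (x r) \<le> R"
    and yb: "\<And>r. a \<le> r \<Longrightarrow> r \<le> b \<Longrightarrow> norm (y r) \<le> R"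
    and hx: "hb x a b \<alpha> M" and hy: "hb y a b \<alpha> M" and M: "M \<ge> 0"
    and x0: "x a = y a" and hw: "hb (\<lambda>r. x r - y r) a b \<alpha> D" and D: "D \<ge> 0"
    and st: "a \<le> s" "s \<le> t" "t \<le> b"
  shows "norm (yint x s t - yint y s t) \<le> C * (1 + csew th * (1 + M powr \<beta>)) * h powr \<alpha> * D * (t - s) powr \<alpha>"
proof -
  have C0: "C > 0" using goodC_pos[OF C] .
  have "0 \<le> norm (x a)" by simp
  then have R0: "R \<ge> 0" using xb[of a] abT by linarith
  have h0: "h \<ge> 0" using h abT by linarith
  have xb3: "norm (x r) \<le> 3 * R" if "a \<le> r" "r \<le> b" for r using xb[OF that] R0 by linarith
  have yb3: "norm (y r) \<le> 3 * R" if "a \<le> r" "r \<le> b" for r using yb[OF that] R0 by linarith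
  define H where "H = h powr \<alpha>"
  define Mb where "Mb = M powr \<beta>"
  define hp where "hp = h powr (\<alpha> - \<beta> * \<alpha>)"
  have H0: "H \<ge> 0" "Mb \<ge> 0" "hp \<ge> 0" unfolding H_def Mb_def hp_def by auto
  define G where "G = (\<lambda>p q. gam A x p q - gam A y p q)"
  define K where "K = C * D * (hp + Mb * H)"
  have K0: "K \<ge> 0" unfolding K_def using C0 D H0 by simp
  have abe: "\<alpha> - \<beta> * \<alpha> \<ge> 0" using al be by (simp add: mult_le_cancel_right1 less_imp_le)
  have wpt: "norm (x r - y r) \<le> D * H" if "a \<le> r" "r \<le> b" for r
  proof -
    have "norm (x r - y r) \<le> D * (b - a) powr \<alpha>" using hb_point[OF hw _ that] x0 al D by simp
    also have "\<dots> \<le> D * H" unfolding H_def using h abT D al by (intro mult_left_mono powr_mono2) auto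
    finally show ?thesis .
  qed
  have dG: "norm (G s' t' - G s' u - G u t') \<le> K * (t' - s') powr th"
    if o: "a \<le> s'" "s' \<le> u" "u \<le> t'" "t' \<le> b" for s' u t'
  proof -
    have e: "G s' t' - G s' u - G u t' = (A t' (x s') - A u (x s')) - (A t' (x u) - A u (x u)) -
        ((A t' (y s') - A u (y s')) - (A t' (y u) - A u (y u)))"
      unfolding G_def gam_def by (simp add: algebra_simps)
    define n1 where "n1 = norm ((x s' - x u) - (y s' - y u))"
    define n2 where "n2 = norm (x s' - x u)"
    define n3 where "n3 = norm (x u - y u)"
    define P where "P = (t' - u) powr \<alpha>"
    define Q1 where "Q1 = (u - s') powr \<alpha>"
    define Q2 where "Q2 = (u - s') powr (\<beta> * \<alpha>)"
    define S where "S = (t' - s') powr th"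
    have sec: "norm (G s' t' - G s' u - G u t') \<le> C * P * (n1 + n2 powr \<beta> * n3)"
      unfolding e n1_def n2_def n3_def P_def
      by (rule goodC_second[OF C order.refl]) (use o abT xb yb in auto)
    have n1b: "n1 \<le> D * Q1"
    proof -
      have "(x s' - x u) - (y s' - y u) = - ((x u - y u) - (x s' - y s'))" by (simp add: algebra_simps)
      then have "n1 = norm ((x u - y u) - (x s' - y s'))" unfolding n1_def by (simp only: norm_minus_cancel)
      also have "\<dots> \<le> D * Q1" unfolding Q1_def using hbD[OF hw o(1,2)] o by simp
      finally show ?thesis .
    qed
    have n2b: "n2 powr \<beta> \<le> Mb * Q2"
    proof -
      have "n2 powr \<beta> \<le> (M * (u - s') powr \<alpha>) powr \<beta>"
        unfolding n2_def using hbD[OF hx o(1,2)] o be by (intro powr_mono2) (auto simp: norm_minus_commute)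
      also have "(M * (u - s') powr \<alpha>) powr \<beta> = Mb * Q2"
        unfolding Mb_def Q2_def using M o by (simp add: powr_mult powr_powr mult.commute)
      finally show ?thesis .
    qed
    have n3b: "n3 \<le> D * H" unfolding n3_def using wpt o by simp
    have nn: "n1 \<ge> 0" "n2 powr \<beta> \<ge> 0" "n3 \<ge> 0" "P \<ge> 0" "Q1 \<ge> 0" "Q2 \<ge> 0" "S \<ge> 0"
      unfolding n1_def n2_def n3_def P_def Q1_def Q2_def S_def by auto
    have "n1 + n2 powr \<beta> * n3 \<le> D * Q1 + (Mb * Q2) * (D * H)"
      using n1b n2b n3b nn H0 by (intro add_mono mult_mono) auto
    then have "C * P * (n1 + n2 powr \<beta> * n3) \<le> C * P * (D * Q1 + (Mb * Q2) * (D * H))"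
      using C0 nn by (intro mult_left_mono) auto
    also have "\<dots> = C * D * (P * Q1) + C * D * Mb * H * (P * Q2)" by (simp add: algebra_simps)
    also have "\<dots> \<le> C * D * (S * hp) + C * D * Mb * H * S"
    proof (intro add_mono mult_left_mono)
      have "P * Q1 \<le> (t' - s') powr (\<alpha> + \<alpha>)" unfolding P_def Q1_def using pw_comb[of s' u t' \<alpha> \<alpha>] o al by simp
      also have "(t' - s') powr (\<alpha> + \<alpha>) = S * (t' - s') powr (\<alpha> - \<beta> * \<alpha>)"
        unfolding S_def by (simp add: powr_add[symmetric])
      also have "\<dots> \<le> S * hp" unfolding hp_def using nn o h abe by (intro mult_left_mono powr_mono2) auto
      finally show "P * Q1 \<le> S * hp" .
      show "P * Q2 \<le> S" unfolding P_def Q2_def S_def using pw_comb[of s' u t' \<alpha> "\<beta> * \<alpha>"] o al be by simp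
    qed (use C0 D H0 in auto)
    also have "\<dots> = K * S" unfolding K_def by (simp add: algebra_simps)
    finally show ?thesis using sec unfolding S_def by linarith
  qed
  have sx: "sew_conv (gam A x) s t (yint x s t)"
    using yi_exists[OF C abT(1) abT(3) xb3 hx M al(1) th_gt st] by simp
  have sy: "sew_conv (gam A y) s t (yint y s t)"
    using yi_exists[OF C abT(1) abT(3) yb3 hy M al(1) th_gt st] by simp
  have sG: "sew_conv G s t (yint x s t - yint y s t)" unfolding G_def by (rule sew_diff[OF sx sy])
  have b1: "norm ((yint x s t - yint y s t) - G s t) \<le> csew th * K * (t - s) powr th"
  proof (rule sew_le[OF st(2) sG])
    fix p n assume "partition_of p n s t"
    then show "norm (psum G p n - G s t) \<le> csew th * K * (t - s) powr th"
      using sew_bound[OF th_gt K0 dG] st by blast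
  qed
  have b2: "norm (G s t) \<le> C * (t - s) powr \<alpha> * (D * H)"
  proof -
    have "norm (G s t) \<le> C * (t - s) powr \<alpha> * norm (x s - y s)"
      unfolding G_def gam_def using goodC_lip[OF C _ st(2) _ xb3 yb3] abT st by auto
    also have "\<dots> \<le> C * (t - s) powr \<alpha> * (D * H)" using wpt[of s] st C0 by (intro mult_left_mono) auto
    finally show ?thesis .
  qed
  have b3: "K * (t - s) powr th \<le> C * D * (H + Mb * H) * (t - s) powr \<alpha>"
  proof -
    have "(t - s) powr th = (t - s) powr \<alpha> * (t - s) powr (\<beta> * \<alpha>)" by (simp add: powr_add)
    also have "\<dots> \<le> (t - s) powr \<alpha> * h powr (\<beta> * \<alpha>)"
      using st h abT al be by (intro mult_left_mono powr_mono2) auto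
    finally have "K * (t - s) powr th \<le> K * ((t - s) powr \<alpha> * h powr (\<beta> * \<alpha>))" using K0 by (intro mult_left_mono)
    also have "\<dots> = C * D * (hp * h powr (\<beta> * \<alpha>) + Mb * H * h powr (\<beta> * \<alpha>)) * (t - s) powr \<alpha>"
      unfolding K_def by (simp add: algebra_simps)
    also have "hp * h powr (\<beta> * \<alpha>) = H" unfolding hp_def H_def by (simp add: powr_add[symmetric])
    also have "Mb * H * h powr (\<beta> * \<alpha>) \<le> Mb * H"
    proof -
      have "h powr (\<beta> * \<alpha>) \<le> 1" using h h0 al be by (intro powr_le1) auto
      then show ?thesis using H0 by (simp add: mult_left_le)
    qed
    then have "C * D * (H + Mb * H * h powr (\<beta> * \<alpha>)) * (t - s) powr \<alpha> \<le> C * D * (H + Mb * H) * (t - s) powr \<alpha>"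
      using C0 D by (intro mult_right_mono mult_left_mono add_left_mono) auto
    finally show ?thesis .
  qed
  have "norm (yint x s t - yint y s t) \<le> norm ((yint x s t - yint y s t) - G s t) + norm (G s t)"
    using norm_triangle_ineq[of "(yint x s t - yint y s t) - G s t" "G s t"] by simp
  also have "\<dots> \<le> csew th * K * (t - s) powr th + C * (t - s) powr \<alpha> * (D * H)" using b1 b2 by linarith
  also have "\<dots> \<le> csew th * (C * D * (H + Mb * H) * (t - s) powr \<alpha>) + C * (t - s) powr \<alpha> * (D * H)"
    using b3 csew_pos[OF th_gt] by (simp add: mult.assoc mult_left_mono)
  also have "\<dots> = C * (1 + csew th * (1 + Mb)) * H * D * (t - s) powr \<alpha>" by (simp add: algebra_simps)
  finally show ?thesis unfolding H_def Mb_def .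
qed

end

context nyde begin

lemma local_exist:
  assumes M0: "M0 \<ge> 0"
  shows "\<exists>h>0. \<forall>a \<xi>. 0 \<le> a \<and> a < T \<and> norm \<xi> \<le> M0 \<longrightarrow>
     (\<exists>y Mh. y a = \<xi> \<and> hb y a (min (a + h) T) \<alpha> Mh \<and> Mh \<ge> 0 \<and>
        (\<forall>t. a \<le> t \<and> t \<le> min (a + h) T \<longrightarrow> norm (y t) \<le> M0 + 1 \<and> sew_conv (gam A y) a t (y t - \<xi>)))"
proof -
  define R where "R = M0 + 1"
  have R0: "R > 0" unfolding R_def using M0 by simp
  define C where "C = CC (3 * R)"
  have C: "goodC (3 * R) C" unfolding C_def using CC R0 by simp
  have C0: "C > 0" using goodC_pos[OF C] .
  define M where "M = 2 * C"
  have Mp: "M \<ge> 0" unfolding M_def using C0 by simp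
  define cs where "cs = csew th"
  have cs0: "cs > 0" unfolding cs_def using csew_pos[OF th_gt] .
  obtain h1 where h1: "h1 > 0" "\<forall>h'. 0 \<le> h' \<and> h' \<le> h1 \<longrightarrow> (cs * M powr \<beta>) * h' powr (\<beta> * \<alpha>) \<le> 1"
    using small_pow[of "\<beta> * \<alpha>" "cs * M powr \<beta>" 1] al be cs0 by auto
  obtain h2 where h2: "h2 > 0" "\<forall>h'. 0 \<le> h' \<and> h' \<le> h2 \<longrightarrow> M * h' powr \<alpha> \<le> 1"
    using small_pow[of \<alpha> M 1] al Mp by auto
  obtain h3 where h3: "h3 > 0" "\<forall>h'. 0 \<le> h' \<and> h' \<le> h3 \<longrightarrow> (C * (1 + cs * (1 + M powr \<beta>))) * h' powr \<alpha> \<le> 1/2"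
    using small_pow[of \<alpha> "C * (1 + cs * (1 + M powr \<beta>))" "1/2"] al C0 cs0 by auto
  define h where "h = min 1 (min h1 (min h2 h3))"
  have hp: "h > 0" "h \<le> 1" "h \<le> h1" "h \<le> h2" "h \<le> h3" unfolding h_def using h1 h2 h3 by auto
  show ?thesis
  proof (intro exI[of _ h] conjI allI impI)
    show "h > 0" by fact
    fix a :: real and \<xi> :: 'v assume a\<xi>: "0 \<le> a \<and> a < T \<and> norm \<xi> \<le> M0"
    define b where "b = min (a + h) T"
    have abT: "0 \<le> a" "a \<le> b" "b \<le> T" "b - a \<le> h" unfolding b_def using a\<xi> hp by auto
    define Bset where "Bset = {y. y a = \<xi> \<and> (\<forall>t. a \<le> t \<and> t \<le> b \<longrightarrow> norm (y t - \<xi>) \<le> 1) \<and> hb y a b \<alpha> M}"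
    define \<Phi> where "\<Phi> y = (\<lambda>t. \<xi> + yint y a t)" for y
    have Bf: "y a = \<xi>" "\<And>t. a \<le> t \<Longrightarrow> t \<le> b \<Longrightarrow> norm (y t) \<le> R" "hb y a b \<alpha> M" if "y \<in> Bset" for y
    proof -
      show "y a = \<xi>" "hb y a b \<alpha> M" using that unfolding Bset_def by auto
      fix t assume t: "a \<le> t" "t \<le> b"
      have "norm (y t - \<xi>) \<le> 1" using that t unfolding Bset_def by auto
      moreover have "norm (y t) \<le> norm (y t - \<xi>) + norm \<xi>" using norm_triangle_ineq[of "y t - \<xi>" \<xi>] by simp
      ultimately show "norm (y t) \<le> R" unfolding R_def using a\<xi> by linarith
    qed
    have Bf3: "norm (y t) \<le> 3 * R" if "y \<in> Bset" "a \<le> t" "t \<le> b" for y t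
      using Bf(2)[OF that] R0 by linarith
    have yadd: "yint y s t = yint y s u + yint y u t" if "y \<in> Bset" "a \<le> s" "s \<le> u" "u \<le> t" "t \<le> b" for y s u t
      by (rule yint_add[OF C abT(1) abT(3) Bf3[OF that(1)] Bf(3)[OF that(1)] Mp al(1) th_gt]) (use that in auto)
    have Phid: "\<Phi> y v - \<Phi> y u = yint y u v" if "y \<in> Bset" "a \<le> u" "u \<le> v" "v \<le> b" for y u v
      unfolding \<Phi>_def using yadd[OF that(1), of a u v] that by simp
    have inv: "\<Phi> y \<in> Bset" if yB: "y \<in> Bset" for y
    proof -
      have hbP: "hb (\<Phi> y) a b \<alpha> M" unfolding hb_def
      proof (intro allI impI)
        fix u v assume uv: "a \<le> u" "u \<le> v" "v \<le> b"
        have "norm (yint y u v) \<le> C * (v - u) powr \<alpha> + cs * (C * M powr \<beta>) * (v - u) powr th"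
          unfolding cs_def by (rule yint_bnd[OF C abT(1) abT(3) Bf3[OF yB] Bf(3)[OF yB] Mp]) (use uv in auto)
        also have "cs * (C * M powr \<beta>) * (v - u) powr th \<le> C * (v - u) powr \<alpha>"
        proof -
          have "(v - u) powr th = (v - u) powr \<alpha> * (v - u) powr (\<beta> * \<alpha>)" by (simp add: powr_add)
          moreover have "(cs * M powr \<beta>) * (v - u) powr (\<beta> * \<alpha>) \<le> 1" using h1 hp uv abT by auto
          ultimately have "cs * (C * M powr \<beta>) * (v - u) powr th = C * (v - u) powr \<alpha> * ((cs * M powr \<beta>) * (v - u) powr (\<beta> * \<alpha>))"
            by (simp add: mult_ac)
          also have "\<dots> \<le> C * (v - u) powr \<alpha> * 1"
            using \<open>(cs * M powr \<beta>) * (v - u) powr (\<beta> * \<alpha>) \<le> 1\<close> C0 by (intro mult_left_mono) auto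
          finally show ?thesis by simp
        qed
        finally have "norm (yint y u v) \<le> M * (v - u) powr \<alpha>" unfolding M_def by simp
        then show "norm (\<Phi> y v - \<Phi> y u) \<le> M * (v - u) powr \<alpha>" using Phid[OF yB uv] by simp
      qed
      have "\<Phi> y a = \<xi>" unfolding \<Phi>_def by (simp add: yint_zero)
      moreover have "norm (\<Phi> y t - \<xi>) \<le> 1" if t: "a \<le> t" "t \<le> b" for t
      proof -
        have "norm (\<Phi> y t - \<xi>) = norm (\<Phi> y t - \<Phi> y a)" using \<open>\<Phi> y a = \<xi>\<close> by simp
        also have "\<dots> \<le> M * (t - a) powr \<alpha>" using hbD[OF hbP _ t(1) t(2)] by simp
        also have "\<dots> \<le> 1" using h2 hp t abT by auto
        finally show ?thesis .
      qed
      ultimately show ?thesis unfolding Bset_def using hbP by auto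
    qed
    have con: "hb (\<lambda>r. \<Phi> y r - \<Phi> z r) a b \<alpha> (D / 2)"
      if yz: "y \<in> Bset" "z \<in> Bset" "D \<ge> 0" "hb (\<lambda>r. y r - z r) a b \<alpha> D" for y z D
      unfolding hb_def
    proof (intro allI impI)
      fix u v assume uv: "a \<le> u" "u \<le> v" "v \<le> b"
      have yza: "y a = z a" using yz(1,2) unfolding Bset_def by simp
      have "norm (yint y u v - yint z u v) \<le> C * (1 + csew th * (1 + M powr \<beta>)) * h powr \<alpha> * D * (v - u) powr \<alpha>"
        by (rule ydiff[OF C abT(1,2,3) abT(4) hp(2) Bf(2)[OF yz(1)] Bf(2)[OF yz(2)] Bf(3)[OF yz(1)] Bf(3)[OF yz(2)] Mp
              yza yz(4) yz(3) uv])
      also have "\<dots> \<le> (1/2) * D * (v - u) powr \<alpha>"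
      proof -
        have "C * (1 + csew th * (1 + M powr \<beta>)) * h powr \<alpha> \<le> 1/2" using h3 hp unfolding cs_def by auto
        then show ?thesis using yz(3) by (intro mult_right_mono) auto
      qed
      finally show "norm (\<Phi> y v - \<Phi> z v - (\<Phi> y u - \<Phi> z u)) \<le> D / 2 * (v - u) powr \<alpha>"
        using Phid[OF yz(1) uv] Phid[OF yz(2) uv] by (simp add: algebra_simps)
    qed
    obtain y where yB: "y \<in> Bset" and fx: "\<forall>t. a \<le> t \<and> t \<le> b \<longrightarrow> \<Phi> y t = y t"
      using picard[where \<Phi> = \<Phi> and Bset = Bset and \<xi> = \<xi>, OF abT(2) Mp al(1) Bset_def inv con] by blast
    show "\<exists>y Mh. y a = \<xi> \<and> hb y a (min (a + h) T) \<alpha> Mh \<and> Mh \<ge> 0 \<and>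
        (\<forall>t. a \<le> t \<and> t \<le> min (a + h) T \<longrightarrow> norm (y t) \<le> M0 + 1 \<and> sew_conv (gam A y) a t (y t - \<xi>))"
    proof (intro exI[of _ y] exI[of _ M] conjI allI impI)
      show "y a = \<xi>" using Bf(1)[OF yB] .
      show "hb y a (min (a + h) T) \<alpha> M" using Bf(3)[OF yB] unfolding b_def .
      show "M \<ge> 0" by fact
      fix t assume t: "a \<le> t \<and> t \<le> min (a + h) T"
      then have t': "a \<le> t" "t \<le> b" unfolding b_def by auto
      show "norm (y t) \<le> M0 + 1" using Bf(2)[OF yB t'] unfolding R_def .
      have "sew_conv (gam A y) a t (yint y a t)"
        using yi_exists[OF C abT(1) abT(3) Bf3[OF yB] Bf(3)[OF yB] Mp al(1) th_gt] t' by simp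
      moreover have "\<xi> + yint y a t = y t" using fx t' unfolding \<Phi>_def by simp
      then have "yint y a t = y t - \<xi>" by (simp add: eq_diff_eq add.commute)
      ultimately show "sew_conv (gam A y) a t (y t - \<xi>)" by simp
    qed
  qed
qed

end

context nyde begin

definition solpath :: "(real \<Rightarrow> 'v) \<Rightarrow> 'v \<Rightarrow> real \<Rightarrow> real \<Rightarrow> real \<Rightarrow> bool" where
  "solpath x x0 \<tau> R M \<longleftrightarrow> 0 \<le> \<tau> \<and> \<tau> \<le> T \<and> R > 0 \<and> M \<ge> 0 \<and> x 0 = x0 \<and>
     (\<forall>r. 0 \<le> r \<and> r \<le> \<tau> \<longrightarrow> norm (x r) \<le> R) \<and> hb x 0 \<tau> \<alpha> M \<and>
     (\<forall>t. 0 \<le> t \<and> t \<le> \<tau> \<longrightarrow> sew_conv (gam A x) 0 t (x t - x0))"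

lemma sew_triv_unique: "sew_conv G s s I \<Longrightarrow> I = 0"
  using sew_unique[OF order.refl _ sew_conv_triv] by blast

lemma sol_solpath:
  assumes S: "is_solution T \<alpha> \<beta> A x0 I x" and t0: "t0 \<in> I"
  shows "\<exists>R M. solpath x x0 t0 R M"
proof -
  have I: "is_interval I" "0 \<in> I" "I \<subseteq> {0..T}" using S unfolding is_solution_def by auto
  have t0T: "0 \<le> t0" "t0 \<le> T" using I t0 by auto
  obtain \<gamma> where g: "0 < \<gamma>" "\<gamma> \<le> 1" "\<alpha> + \<beta> * \<gamma> > 1" "holder_on \<gamma> {0..t0} x"
    using S t0 unfolding is_solution_def by blast
  obtain Cg where Cg: "\<forall>u\<in>{0..t0}. \<forall>v\<in>{0..t0}. norm (x u - x v) \<le> Cg * \<bar>u - v\<bar> powr \<gamma>"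
    using g(4) unfolding holder_on_def by blast
  define Mg where "Mg = max Cg 0"
  have Mg0: "Mg \<ge> 0" unfolding Mg_def by simp
  have hbg: "hb x 0 t0 \<gamma> Mg" unfolding hb_def
  proof (intro allI impI)
    fix u v :: real assume uv: "0 \<le> u" "u \<le> v" "v \<le> t0"
    have "v \<in> {0..t0}" "u \<in> {0..t0}" using uv by auto
    then have "norm (x v - x u) \<le> Cg * \<bar>v - u\<bar> powr \<gamma>" using Cg by blast
    also have "\<bar>v - u\<bar> = v - u" using uv by simp
    also have "Cg * (v - u) powr \<gamma> \<le> Mg * (v - u) powr \<gamma>" unfolding Mg_def by (intro mult_right_mono) auto
    finally show "norm (x v - x u) \<le> Mg * (v - u) powr \<gamma>" .
  qed
  have inI: "t \<in> I" if "0 \<le> t" "t \<le> t0" for t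
    using I(1) I(2) t0 that unfolding is_interval_1 by blast
  have eq: "sew_conv (gam A x) 0 t (x t - x0)" if "0 \<le> t" "t \<le> t0" for t
    using S inI[OF that] unfolding is_solution_def young_iff by blast
  have x00: "x 0 = x0" using sew_triv_unique[OF eq[of 0]] t0T by simp
  define Rb where "Rb = norm x0 + Mg * t0 powr \<gamma> + 1"
  have "Mg * t0 powr \<gamma> \<ge> 0" using Mg0 by simp
  moreover have "norm x0 \<ge> 0" by simp
  ultimately have Rb0: "Rb > 0" unfolding Rb_def by linarith
  have xb: "norm (x r) \<le> Rb" if "0 \<le> r" "r \<le> t0" for r
  proof -
    have "norm (x r - x 0) \<le> Mg * (r - 0) powr \<gamma>" using hbD[OF hbg _ that(1) that(2)] by simp
    also have "\<dots> \<le> Mg * t0 powr \<gamma>" using Mg0 that g by (intro mult_left_mono powr_mono2) auto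
    finally have "norm (x r - x 0) \<le> Mg * t0 powr \<gamma>" .
    moreover have "norm (x r) \<le> norm (x r - x 0) + norm x0" using norm_triangle_ineq[of "x r - x 0" "x 0"] x00 by simp
    ultimately show ?thesis unfolding Rb_def by linarith
  qed
  define Cb where "Cb = CC Rb"
  have Cb: "goodC Rb Cb" unfolding Cb_def using CC Rb0 by simp
  have Cb0: "Cb > 0" using goodC_pos[OF Cb] .
  have yeq: "yint x 0 t = x t - x0" if "0 \<le> t" "t \<le> t0" for t using yint_eq[OF that(1) eq[OF that]] .
  define cs where "cs = csew (\<alpha> + \<beta> * \<gamma>)"
  have cs0: "cs > 0" unfolding cs_def using csew_pos[OF g(3)] .
  define Ma where "Ma = Cb + cs * (Cb * Mg powr \<beta>) * t0 powr (\<beta> * \<gamma>)"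
  have Ma0: "Ma \<ge> 0" unfolding Ma_def using Cb0 cs0 by simp
  have hba: "hb x 0 t0 \<alpha> Ma" unfolding hb_def
  proof (intro allI impI)
    fix u v :: real assume uv: "0 \<le> u" "u \<le> v" "v \<le> t0"
    have "x v - x u = yint x u v"
      using yint_add[OF Cb order.refl t0T(2) xb hbg Mg0 g(1) g(3), of 0 u v] yeq[of u] yeq[of v] uv by simp
    moreover have "norm (yint x u v) \<le> Ma * (v - u) powr \<alpha>"
    proof -
      have i1: "norm (yint x u v - gam A x u v) \<le> cs * (Cb * Mg powr \<beta>) * (v - u) powr (\<alpha> + \<beta> * \<gamma>)"
        unfolding cs_def using yi_exists[OF Cb order.refl t0T(2) xb hbg Mg0 g(1) g(3), of u v] uv by simp
      have i2: "norm (gam A x u v) \<le> Cb * (v - u) powr \<alpha>"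
        unfolding gam_def using goodC_A[OF Cb _ uv(2)] uv t0T xb[of u] by auto
      have i3: "(v - u) powr (\<alpha> + \<beta> * \<gamma>) \<le> (v - u) powr \<alpha> * t0 powr (\<beta> * \<gamma>)"
      proof -
        have "(v - u) powr (\<alpha> + \<beta> * \<gamma>) = (v - u) powr \<alpha> * (v - u) powr (\<beta> * \<gamma>)" by (simp add: powr_add)
        also have "\<dots> \<le> (v - u) powr \<alpha> * t0 powr (\<beta> * \<gamma>)"
          using uv be g by (intro mult_left_mono powr_mono2) auto
        finally show ?thesis .
      qed
      have i4: "cs * (Cb * Mg powr \<beta>) * (v - u) powr (\<alpha> + \<beta> * \<gamma>) \<le> cs * (Cb * Mg powr \<beta>) * ((v - u) powr \<alpha> * t0 powr (\<beta> * \<gamma>))"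
        using i3 cs0 Cb0 by (intro mult_left_mono) auto
      have "norm (yint x u v) \<le> norm (yint x u v - gam A x u v) + norm (gam A x u v)"
        using norm_triangle_ineq[of "yint x u v - gam A x u v" "gam A x u v"] by simp
      also have "\<dots> \<le> cs * (Cb * Mg powr \<beta>) * ((v - u) powr \<alpha> * t0 powr (\<beta> * \<gamma>)) + Cb * (v - u) powr \<alpha>"
        using i1 i2 i4 by linarith
      also have "\<dots> = Ma * (v - u) powr \<alpha>" unfolding Ma_def by (simp add: algebra_simps)
      finally show ?thesis .
    qed
    ultimately show "norm (x v - x u) \<le> Ma * (v - u) powr \<alpha>" by simp
  qed
  show ?thesis unfolding solpath_def using t0T Rb0 Ma0 x00 xb hba eq by blast
qed

lemma le_half_pow_zero:
  fixes z :: "'a::real_normed_vector"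
  assumes "\<And>n. norm z \<le> c * (1/2) ^ n"
  shows "z = 0"
proof -
  have "(\<lambda>n. c * (1/2::real) ^ n) \<longlonglongrightarrow> 0" by (intro tendsto_mult_right_zero LIMSEQ_power_zero) simp
  then have "norm z \<le> 0" by (rule LIMSEQ_le_const) (use assms in auto)
  then show ?thesis by simp
qed

lemma solpath_mono: "solpath x x0 \<tau> R M \<Longrightarrow> R \<le> R' \<Longrightarrow> M \<le> M' \<Longrightarrow> solpath x x0 \<tau> R' M'"
  unfolding solpath_def using hb_mono by (meson order_trans less_le_trans)

lemma solpath_yint:
  assumes P: "solpath x x0 \<tau> R M" and C: "goodC R C" and uv: "0 \<le> u" "u \<le> v" "v \<le> \<tau>"
  shows "x v - x u = yint x u v"
proof -
  have p: "0 \<le> \<tau>" "\<tau> \<le> T" "M \<ge> 0" "x 0 = x0" "\<And>r. 0 \<le> r \<Longrightarrow> r \<le> \<tau> \<Longrightarrow> norm (x r) \<le> R" "hb x 0 \<tau> \<alpha> M"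
    "\<And>t. 0 \<le> t \<Longrightarrow> t \<le> \<tau> \<Longrightarrow> sew_conv (gam A x) 0 t (x t - x0)"
    using P unfolding solpath_def by auto
  have yeq: "yint x 0 t = x t - x0" if "0 \<le> t" "t \<le> \<tau>" for t using yint_eq[OF that(1) p(7)[OF that]] .
  show ?thesis
    using yint_add[OF C order.refl p(2) p(5) p(6) p(3) al(1) th_gt, of 0 u v] yeq[of u] yeq[of v] uv by simp
qed

lemma solpath_unique:
  assumes X: "solpath x x0 \<tau> R1 M1" and Y: "solpath y x0 \<tau> R2 M2"
  shows "\<forall>t. 0 \<le> t \<and> t \<le> \<tau> \<longrightarrow> x t = y t"
proof -
  define R where "R = max R1 R2"
  define M where "M = max M1 M2"
  have X': "solpath x x0 \<tau> R M" using solpath_mono[OF X] unfolding R_def M_def by auto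
  have Y': "solpath y x0 \<tau> R M" using solpath_mono[OF Y] unfolding R_def M_def by auto
  have px: "0 \<le> \<tau>" "\<tau> \<le> T" "R > 0" "M \<ge> 0" "x 0 = x0" "\<And>r. 0 \<le> r \<Longrightarrow> r \<le> \<tau> \<Longrightarrow> norm (x r) \<le> R" "hb x 0 \<tau> \<alpha> M"
    using X' unfolding solpath_def by auto
  have py: "y 0 = x0" "\<And>r. 0 \<le> r \<Longrightarrow> r \<le> \<tau> \<Longrightarrow> norm (y r) \<le> R" "hb y 0 \<tau> \<alpha> M"
    using Y' unfolding solpath_def by auto
  define C where "C = CC (3 * R)"
  have C: "goodC (3 * R) C" unfolding C_def using CC px(3) by simp
  have C0: "C > 0" using goodC_pos[OF C] .
  have CR: "goodC R C" using goodC_mono[OF C] px(3) by simp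
  obtain h0 where h0: "h0 > 0" "\<forall>h'. 0 \<le> h' \<and> h' \<le> h0 \<longrightarrow> (C * (1 + csew th * (1 + M powr \<beta>))) * h' powr \<alpha> \<le> 1/2"
    using small_pow[of \<alpha> "C * (1 + csew th * (1 + M powr \<beta>))" "1/2"] al C0 csew_pos[OF th_gt] by auto
  define h where "h = min 1 h0"
  have hp: "h > 0" "h \<le> 1" "C * (1 + csew th * (1 + M powr \<beta>)) * h powr \<alpha> \<le> 1/2"
    unfolding h_def using h0 by auto
  have xd: "x v - x u = yint x u v" if "0 \<le> u" "u \<le> v" "v \<le> \<tau>" for u v using solpath_yint[OF X' CR that] .
  have yd: "y v - y u = yint y u v" if "0 \<le> u" "u \<le> v" "v \<le> \<tau>" for u v using solpath_yint[OF Y' CR that] .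
  have step: "\<forall>t. 0 \<le> t \<and> t \<le> min (real k * h) \<tau> \<longrightarrow> x t = y t" for k
  proof (induction k)
    case 0 then show ?case using px(5) py(1) by auto
  next
    case (Suc k)
    define a where "a = min (real k * h) \<tau>"
    define b where "b = min (real (Suc k) * h) \<tau>"
    have abp: "0 \<le> a" "a \<le> b" "b \<le> \<tau>" "b - a \<le> h" unfolding a_def b_def using hp px(1)
      by (auto simp: algebra_simps min_def)
    have xa: "x a = y a" using Suc abp unfolding a_def by auto
    have xb: "\<And>r. a \<le> r \<Longrightarrow> r \<le> b \<Longrightarrow> norm (x r) \<le> R" using px(6) abp by auto
    have yb: "\<And>r. a \<le> r \<Longrightarrow> r \<le> b \<Longrightarrow> norm (y r) \<le> R" using py(2) abp by auto
    have hx: "hb x a b \<alpha> M" using hb_sub[OF px(7) abp(1) abp(3)] .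
    have hy: "hb y a b \<alpha> M" using hb_sub[OF py(3) abp(1) abp(3)] .
    have hw0: "hb (\<lambda>r. x r - y r) a b \<alpha> (M + M)" by (rule hb_diff[OF hx hy])
    have hwn: "hb (\<lambda>r. x r - y r) a b \<alpha> ((M + M) * (1/2)^n)" for n
    proof (induction n)
      case 0 then show ?case using hw0 by simp
    next
      case (Suc n)
      show ?case unfolding hb_def
      proof (intro allI impI)
        fix u v assume uv: "a \<le> u" "u \<le> v" "v \<le> b"
        have D0: "(M + M) * (1/2)^n \<ge> 0" using px(4) by simp
        have "norm (yint x u v - yint y u v) \<le> C * (1 + csew th * (1 + M powr \<beta>)) * h powr \<alpha> * ((M + M) * (1/2)^n) * (v - u) powr \<alpha>"
          by (rule ydiff[OF C abp(1,2) _ abp(4) hp(2) xb yb hx hy px(4) xa Suc D0 uv]) (use abp px in auto)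
        also have "\<dots> \<le> (1/2) * ((M + M) * (1/2)^n) * (v - u) powr \<alpha>"
          using hp(3) D0 by (intro mult_right_mono) auto
        also have "\<dots> = (M + M) * (1/2)^(Suc n) * (v - u) powr \<alpha>" by simp
        finally have "norm (yint x u v - yint y u v) \<le> (M + M) * (1/2)^(Suc n) * (v - u) powr \<alpha>" .
        moreover have "(x v - y v) - (x u - y u) = yint x u v - yint y u v"
          using xd[of u v] yd[of u v] uv abp by (simp add: algebra_simps)
        ultimately show "norm ((x v - y v) - (x u - y u)) \<le> (M + M) * (1/2)^(Suc n) * (v - u) powr \<alpha>" by simp
      qed
    qed
    show ?case
    proof (intro allI impI)
      fix t assume t: "0 \<le> t \<and> t \<le> min (real (Suc k) * h) \<tau>"
      show "x t = y t"
      proof (cases "t \<le> a")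
        case True then show ?thesis using Suc t unfolding a_def by auto
      next
        case False
        then have ta: "a \<le> t" "t \<le> b" using t unfolding b_def by auto
        have "(x t - y t) - (x a - y a) = 0"
        proof (rule le_half_pow_zero)
          fix n
          have "norm ((x t - y t) - (x a - y a)) \<le> (M + M) * (1/2)^n * (t - a) powr \<alpha>"
            using hbD[OF hwn[of n] order.refl ta(1) ta(2)] by simp
          then show "norm ((x t - y t) - (x a - y a)) \<le> ((M + M) * (t - a) powr \<alpha>) * (1/2)^n"
            by (simp add: mult_ac)
        qed
        then show ?thesis using xa by simp
      qed
    qed
  qed
  show ?thesis
  proof (intro allI impI)
    fix t assume t: "0 \<le> t \<and> t \<le> \<tau>"
    obtain k :: nat where k: "\<tau> / h < real k" using reals_Archimedean2 by blast
    then have "\<tau> \<le> real k * h" using hp by (simp add: field_simps)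
    then show "x t = y t" using step[of k] t by auto
  qed
qed

end

context nyde begin

lemma solpath_sol:
  assumes P: "solpath z x0 b R M"
  shows "is_solution T \<alpha> \<beta> A x0 {0..b} z"
proof -
  have p: "0 \<le> b" "b \<le> T" "hb z 0 b \<alpha> M" "\<And>t. 0 \<le> t \<Longrightarrow> t \<le> b \<Longrightarrow> sew_conv (gam A z) 0 t (z t - x0)"
    using P unfolding solpath_def by auto
  have hol: "holder_on \<alpha> {0..s} z" if "s \<in> {0..b}" for s
    unfolding holder_on_def
  proof (intro exI[of _ M] ballI)
    fix u v assume uv: "u \<in> {0..s}" "v \<in> {0..s}"
    show "norm (z u - z v) \<le> M * \<bar>u - v\<bar> powr \<alpha>"
    proof (cases "u \<le> v")
      case True
      then have "norm (z v - z u) \<le> M * (v - u) powr \<alpha>" using hbD[OF p(3)] uv that by auto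
      then show ?thesis using True by (simp add: norm_minus_commute abs_if)
    next
      case False
      then have "norm (z u - z v) \<le> M * (u - v) powr \<alpha>" using hbD[OF p(3)] uv that by auto
      then show ?thesis using False by (simp add: abs_if)
    qed
  qed
  show ?thesis unfolding is_solution_def
  proof (intro conjI ballI)
    show "is_interval {0..b}" by (rule is_interval_cc)
    show "0 \<in> {0..b}" using p by simp
    show "{0..b} \<subseteq> {0..T}" using p by auto
    fix t assume t: "t \<in> {0..b}"
    show "\<exists>\<gamma>>0. \<gamma> \<le> 1 \<and> 1 < \<alpha> + \<beta> * \<gamma> \<and> holder_on \<gamma> {0..t} z"
      using hol[OF t] al th_gt by (intro exI[of _ \<alpha>]) auto
    show "young_has_integral A z 0 t (z t - x0)" unfolding young_iff using p(4) t by auto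
  qed
qed

lemma sol_agree:
  assumes S1: "is_solution T \<alpha> \<beta> A x0 I x" and S2: "is_solution T \<alpha> \<beta> A x0 J y" and t: "t \<in> I" "t \<in> J"
  shows "x t = y t"
proof -
  obtain R1 M1 where P1: "solpath x x0 t R1 M1" using sol_solpath[OF S1 t(1)] by blast
  obtain R2 M2 where P2: "solpath y x0 t R2 M2" using sol_solpath[OF S2 t(2)] by blast
  have "0 \<le> t" using P1 unfolding solpath_def by simp
  then show ?thesis using solpath_unique[OF P1 P2] by simp
qed

lemma gam_local: "(\<And>p. s \<le> p \<Longrightarrow> p \<le> t \<Longrightarrow> z p = x p) \<Longrightarrow> sew_conv (gam A z) s t I \<longleftrightarrow> sew_conv (gam A x) s t I"
  by (rule sew_local) (simp add: gam_def)

lemma extend: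
  assumes M0: "M0 \<ge> 0"
  shows "\<exists>h>0. \<forall>I x t. is_solution T \<alpha> \<beta> A x0 I x \<and> t \<in> I \<and> t < T \<and> norm (x t) \<le> M0 \<longrightarrow>
            (\<exists>z. is_solution T \<alpha> \<beta> A x0 {0..min (t + h) T} z)"
proof -
  obtain h where h: "h > 0" "\<forall>a \<xi>. 0 \<le> a \<and> a < T \<and> norm \<xi> \<le> M0 \<longrightarrow>
     (\<exists>y Mh. y a = \<xi> \<and> hb y a (min (a + h) T) \<alpha> Mh \<and> Mh \<ge> 0 \<and>
        (\<forall>t. a \<le> t \<and> t \<le> min (a + h) T \<longrightarrow> norm (y t) \<le> M0 + 1 \<and> sew_conv (gam A y) a t (y t - \<xi>)))"
    using local_exist[OF M0] by blast
  show ?thesis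
  proof (intro exI[of _ h] conjI allI impI)
    show "h > 0" by fact
    fix I x t assume a: "is_solution T \<alpha> \<beta> A x0 I x \<and> t \<in> I \<and> t < T \<and> norm (x t) \<le> M0"
    obtain Rx Mx where Px: "solpath x x0 t Rx Mx" using sol_solpath a by blast
    have px: "0 \<le> t" "Rx > 0" "Mx \<ge> 0" "x 0 = x0" "\<And>r. 0 \<le> r \<Longrightarrow> r \<le> t \<Longrightarrow> norm (x r) \<le> Rx" "hb x 0 t \<alpha> Mx"
      "\<And>s. 0 \<le> s \<Longrightarrow> s \<le> t \<Longrightarrow> sew_conv (gam A x) 0 s (x s - x0)"
      using Px unfolding solpath_def by auto
    define b where "b = min (t + h) T"
    have tb: "t \<le> b" "b \<le> T" unfolding b_def using a h by auto
    obtain y My where y: "y t = x t" "hb y t b \<alpha> My" "My \<ge> 0"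
        "\<And>s. t \<le> s \<Longrightarrow> s \<le> b \<Longrightarrow> norm (y s) \<le> M0 + 1"
        "\<And>s. t \<le> s \<Longrightarrow> s \<le> b \<Longrightarrow> sew_conv (gam A y) t s (y s - x t)"
      using h(2) a px(1) unfolding b_def by blast
    define z where "z r = (if r \<le> t then x r else y r)" for r
    define Rz where "Rz = max Rx (M0 + 1)"
    define Mz where "Mz = Mx + My"
    have zx: "z r = x r" if "r \<le> t" for r using that unfolding z_def by simp
    have zy: "z r = y r" if "t \<le> r" for r using that y(1) unfolding z_def by auto
    have Rz0: "Rz > 0" unfolding Rz_def using px(2) by simp
    have zb: "norm (z r) \<le> Rz" if "0 \<le> r" "r \<le> b" for r
    proof (cases "r \<le> t")
      case True
      then have "norm (z r) \<le> Rx" using zx[OF True] px(5) that by simp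
      then show ?thesis unfolding Rz_def by simp
    next
      case False
      then have "norm (z r) \<le> M0 + 1" using zy[of r] y(4)[of r] that by simp
      then show ?thesis unfolding Rz_def by simp
    qed
    have hz: "hb z 0 b \<alpha> Mz" unfolding hb_def
    proof (intro allI impI)
      fix u v assume uv: "0 \<le> u" "u \<le> v" "v \<le> b"
      have pw: "(v - u) powr \<alpha> \<ge> 0" by simp
      consider "v \<le> t" | "t \<le> u" | "u < t" "t < v" by linarith
      then show "norm (z v - z u) \<le> Mz * (v - u) powr \<alpha>"
      proof cases
        case 1
        then have "norm (z v - z u) \<le> Mx * (v - u) powr \<alpha>" using zx hbD[OF px(6) uv(1,2)] uv by simp
        also have "\<dots> \<le> Mz * (v - u) powr \<alpha>" unfolding Mz_def using y(3) pw by (intro mult_right_mono) auto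
        finally show ?thesis .
      next
        case 2
        then have "norm (z v - z u) \<le> My * (v - u) powr \<alpha>" using zy hbD[OF y(2) 2 uv(2,3)] uv by simp
        also have "\<dots> \<le> Mz * (v - u) powr \<alpha>" unfolding Mz_def using px(3) pw by (intro mult_right_mono) auto
        finally show ?thesis .
      next
        case 3
        have e: "z v - z u = (y v - y t) + (x t - x u)" using zx[of u] zy[of v] y(1) 3 by simp
        have "norm (z v - z u) \<le> norm (y v - y t) + norm (x t - x u)" unfolding e by (rule norm_triangle_ineq)
        also have "\<dots> \<le> My * (v - t) powr \<alpha> + Mx * (t - u) powr \<alpha>"
          using hbD[OF y(2) order.refl _ uv(3)] hbD[OF px(6) uv(1) _ order.refl] 3 by (simp add: add_mono)
        also have "\<dots> \<le> My * (v - u) powr \<alpha> + Mx * (v - u) powr \<alpha>"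
          using 3 y(3) px(3) al by (intro add_mono mult_left_mono powr_mono2) auto
        also have "\<dots> = Mz * (v - u) powr \<alpha>" unfolding Mz_def by (simp add: algebra_simps)
        finally show ?thesis .
      qed
    qed
    have Mz0: "Mz \<ge> 0" unfolding Mz_def using px(3) y(3) by simp
    define C where "C = CC Rz"
    have C: "goodC Rz C" unfolding C_def using CC Rz0 by simp
    have ev: "sew_conv (gam A z) 0 s (z s - x0)" if s: "0 \<le> s" "s \<le> b" for s
    proof (cases "s \<le> t")
      case True
      have "sew_conv (gam A x) 0 s (x s - x0)" using px(7) s True by simp
      then show ?thesis using gam_local[of 0 s z x] zx True by auto
    next
      case False
      have e1: "sew_conv (gam A z) 0 t (x t - x0)" using px(7)[of t] px(1) gam_local[of 0 t z x] zx by auto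
      have e2: "sew_conv (gam A z) t s (y s - x t)" using y(5)[of s] False s gam_local[of t s z y] zy by auto
      have "yint z 0 s = yint z 0 t + yint z t s"
        by (rule yint_add[OF C order.refl tb(2) zb hz Mz0 al(1) th_gt]) (use False s px(1) in auto)
      also have "yint z 0 t = x t - x0" using yint_eq[OF px(1) e1] .
      also have "yint z t s = y s - x t" using yint_eq[OF _ e2] False by simp
      finally have "yint z 0 s = z s - x0" using zy[of s] False by simp
      moreover have "sew_conv (gam A z) 0 s (yint z 0 s)"
        using yi_exists[OF C order.refl tb(2) zb hz Mz0 al(1) th_gt] s by simp
      ultimately show ?thesis by simp
    qed
    have "solpath z x0 b Rz Mz" unfolding solpath_def
      using tb px(1) Rz0 Mz0 zx[of 0] px(4) zb hz ev by auto
    then show "\<exists>z. is_solution T \<alpha> \<beta> A x0 {0..min (t + h) T} z" using solpath_sol unfolding b_def by blast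
  qed
qed

end

context nyde begin

definition Ist :: "'v \<Rightarrow> real set" where
  "Ist x0 = \<Union>{I. \<exists>x. is_solution T \<alpha> \<beta> A x0 I x}"

definition xst :: "'v \<Rightarrow> real \<Rightarrow> 'v" where
  "xst x0 t = (SOME v. \<exists>I x. is_solution T \<alpha> \<beta> A x0 I x \<and> t \<in> I \<and> x t = v)"

lemma triv_sol: "is_solution T \<alpha> \<beta> A x0 {0..0} (\<lambda>_. x0)"
proof (rule solpath_sol)
  have "0 \<le> norm x0" by simp
  then have n: "0 < norm x0 + 1" by linarith
  show "solpath (\<lambda>_. x0) x0 0 (norm x0 + 1) 0"
    unfolding solpath_def hb_def using T sew_conv_triv[of "gam A (\<lambda>_. x0)" 0] n
    by auto
qed

lemma Ist_0: "0 \<in> Ist x0"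
proof -
  have "(0::real) \<in> {0..0}" by simp
  then show ?thesis unfolding Ist_def using triv_sol by blast
qed

lemma Ist_sub: "Ist x0 \<subseteq> {0..T}"
  unfolding Ist_def is_solution_def by blast

lemma Ist_le: "t \<in> Ist x0 \<Longrightarrow> 0 \<le> t \<and> t \<le> T"
  using Ist_sub[of x0] by auto

lemma Ist_iff: "t \<in> Ist x0 \<longleftrightarrow> (\<exists>I x. is_solution T \<alpha> \<beta> A x0 I x \<and> t \<in> I)"
  unfolding Ist_def by blast

lemma xst_eq:
  assumes S: "is_solution T \<alpha> \<beta> A x0 I x" and t: "t \<in> I"
  shows "xst x0 t = x t"
proof -
  have "\<exists>I x. is_solution T \<alpha> \<beta> A x0 I x \<and> t \<in> I \<and> x t = xst x0 t"
    unfolding xst_def by (rule someI_ex) (use S t in blast)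
  then obtain I' x' where o: "is_solution T \<alpha> \<beta> A x0 I' x'" "t \<in> I'" "x' t = xst x0 t" by blast
  have "x t = x' t" by (rule sol_agree[OF S o(1) t o(2)])
  then show ?thesis using o(3) by simp
qed

lemma holder_on_cong: "holder_on \<gamma> S x \<Longrightarrow> (\<And>r. r \<in> S \<Longrightarrow> y r = x r) \<Longrightarrow> holder_on \<gamma> S y"
  unfolding holder_on_def by auto

lemma Ist_sol: "is_solution T \<alpha> \<beta> A x0 (Ist x0) (xst x0)"
  unfolding is_solution_def
proof (intro conjI ballI)
  show "is_interval (Ist x0)" unfolding is_interval_1
  proof (intro ballI allI impI)
    fix a b c assume ab: "a \<in> Ist x0" "b \<in> Ist x0" and c: "a \<le> c \<and> c \<le> b"
    obtain I x where S: "is_solution T \<alpha> \<beta> A x0 I x" "b \<in> I" using ab(2) Ist_iff by blast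
    have "0 \<le> a" using Ist_le[OF ab(1)] by simp
    moreover have "is_interval I" "0 \<in> I" using S unfolding is_solution_def by auto
    ultimately have "\<forall>x. 0 \<le> x \<and> x \<le> b \<longrightarrow> x \<in> I" using S(2) unfolding is_interval_1 by blast
    then have "c \<in> I" using c \<open>0 \<le> a\<close> by simp
    then show "c \<in> Ist x0" using S(1) Ist_iff by blast
  qed
  show "0 \<in> Ist x0" by (rule Ist_0)
  show "Ist x0 \<subseteq> {0..T}" by (rule Ist_sub)
  fix t assume t: "t \<in> Ist x0"
  obtain I x where S: "is_solution T \<alpha> \<beta> A x0 I x" "t \<in> I" using t Ist_iff by blast
  have sub: "r \<in> I" if "r \<in> {0..t}" for r
  proof -
    have "is_interval I" "0 \<in> I" using S unfolding is_solution_def by auto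
    then have "\<forall>x. 0 \<le> x \<and> x \<le> t \<longrightarrow> x \<in> I" using S(2) unfolding is_interval_1 by blast
    then show ?thesis using that by simp
  qed
  have eqx: "xst x0 r = x r" if "r \<in> {0..t}" for r using xst_eq[OF S(1) sub[OF that]] .
  obtain \<gamma> where g: "0 < \<gamma>" "\<gamma> \<le> 1" "\<alpha> + \<beta> * \<gamma> > 1" "holder_on \<gamma> {0..t} x"
    using S unfolding is_solution_def by blast
  show "\<exists>\<gamma>>0. \<gamma> \<le> 1 \<and> 1 < \<alpha> + \<beta> * \<gamma> \<and> holder_on \<gamma> {0..t} (xst x0)"
    using g holder_on_cong[OF g(4) eqx] by blast
  have "young_has_integral A x 0 t (x t - x0)" using S unfolding is_solution_def by blast
  then have "sew_conv (gam A x) 0 t (x t - x0)" unfolding young_iff .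
  moreover have "\<And>p. 0 \<le> p \<Longrightarrow> p \<le> t \<Longrightarrow> xst x0 p = x p" using eqx by simp
  ultimately have "sew_conv (gam A (xst x0)) 0 t (x t - x0)" using gam_local[of 0 t "xst x0" x] by blast
  moreover have "0 \<le> t" using Ist_le[OF t] by simp
  ultimately show "young_has_integral A (xst x0) 0 t (xst x0 t - x0)"
    unfolding young_iff using eqx[of t] by simp
qed

lemma Ist_max: "is_max_solution T \<alpha> \<beta> A x0 (Ist x0) (xst x0)"
  unfolding is_max_solution_def
proof (intro conjI Ist_sol notI)
  assume "\<exists>J y. is_solution T \<alpha> \<beta> A x0 J y \<and> Ist x0 \<subset> J \<and> (\<forall>t\<in>Ist x0. y t = xst x0 t)"
  then obtain J y where "is_solution T \<alpha> \<beta> A x0 J y" "Ist x0 \<subset> J" by blast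
  moreover then have "J \<subseteq> Ist x0" unfolding Ist_def by blast
  ultimately show False by blast
qed

lemma Ist_unique:
  assumes M: "is_max_solution T \<alpha> \<beta> A x0 J y"
  shows "J = Ist x0 \<and> (\<forall>t\<in>Ist x0. y t = xst x0 t)"
proof -
  have S: "is_solution T \<alpha> \<beta> A x0 J y" using M unfolding is_max_solution_def by blast
  have JI: "J \<subseteq> Ist x0" unfolding Ist_def using S by blast
  have agree: "\<forall>t\<in>J. xst x0 t = y t" using xst_eq[OF S] by blast
  have "J = Ist x0"
  proof (rule ccontr)
    assume "J \<noteq> Ist x0"
    then have "J \<subset> Ist x0" using JI by blast
    then show False using M Ist_sol agree unfolding is_max_solution_def by blast
  qed
  then show ?thesis using agree by simp
qed

lemma Ist_shape:
  "\<exists>c. 0 \<le> c \<and> c \<le> T \<and> (Ist x0 = {0..c} \<or> (0 < c \<and> Ist x0 = {0..<c}))"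
proof -
  define c where "c = Sup (Ist x0)"
  have ne: "Ist x0 \<noteq> {}" using Ist_0 by blast
  have bdd: "bdd_above (Ist x0)" by (rule bdd_above_mono[OF bdd_above_Icc Ist_sub])
  have c0: "0 \<le> c" unfolding c_def using cSup_upper[OF Ist_0 bdd] .
  have cT: "c \<le> T" unfolding c_def using Ist_le by (intro cSup_least[OF ne]) auto
  have up: "t \<le> c" if "t \<in> Ist x0" for t unfolding c_def using cSup_upper[OF that bdd] .
  have low: "t \<in> Ist x0" if "0 \<le> t" "t < c" for t
  proof -
    have "t < Sup (Ist x0)" using that unfolding c_def by simp
    then have "\<exists>x\<in>Ist x0. t < x" using less_cSup_iff[OF ne bdd, of t] by simp
    then obtain s where s: "s \<in> Ist x0" "t < s" by (elim bexE)
    have "is_interval (Ist x0)" using Ist_sol unfolding is_solution_def by blast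
    then have "\<forall>a\<in>Ist x0. \<forall>b\<in>Ist x0. \<forall>x. a \<le> x \<and> x \<le> b \<longrightarrow> x \<in> Ist x0" unfolding is_interval_1 .
    then have "\<forall>x. 0 \<le> x \<and> x \<le> s \<longrightarrow> x \<in> Ist x0" using Ist_0 s(1) by blast
    then show ?thesis using that s(2) by simp
  qed
  have sub: "Ist x0 \<subseteq> {0..c}" using up Ist_le by auto
  show ?thesis
  proof (cases "c \<in> Ist x0")
    case True
    have "Ist x0 = {0..c}"
    proof
      show "Ist x0 \<subseteq> {0..c}" by (rule sub)
      show "{0..c} \<subseteq> Ist x0"
      proof
        fix t assume t: "t \<in> {0..c}"
        show "t \<in> Ist x0"
        proof (cases "t = c")
          case True then show ?thesis using \<open>c \<in> Ist x0\<close> by simp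
        next
          case False then show ?thesis using low t by simp
        qed
      qed
    qed
    then show ?thesis using c0 cT by blast
  next
    case False
    have "Ist x0 = {0..<c}"
    proof
      show "Ist x0 \<subseteq> {0..<c}"
      proof
        fix t assume t: "t \<in> Ist x0"
        then have "t \<in> {0..c}" "t \<noteq> c" using sub False by auto
        then show "t \<in> {0..<c}" by simp
      qed
      show "{0..<c} \<subseteq> Ist x0" using low by auto
    qed
    moreover have "c \<noteq> 0" using False Ist_0[of x0] by auto
    then have "0 < c" using c0 by simp
    ultimately show ?thesis using c0 cT by blast
  qed
qed

lemma Ist_closed_T: "Ist x0 = {0..c} \<Longrightarrow> c = T"
proof -
  assume I: "Ist x0 = {0..c}"
  have "c \<in> Ist x0" using Ist_0[of x0] I by auto
  then have cT: "c \<le> T" "0 \<le> c" using Ist_le by auto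
  show "c = T"
  proof (rule ccontr)
    assume "c \<noteq> T"
    then have cT': "c < T" using cT by simp
    obtain h where h: "h > 0" "\<forall>I x t. is_solution T \<alpha> \<beta> A x0 I x \<and> t \<in> I \<and> t < T \<and> norm (x t) \<le> norm (xst x0 c) \<longrightarrow>
            (\<exists>z. is_solution T \<alpha> \<beta> A x0 {0..min (t + h) T} z)"
      using extend[OF norm_ge_zero[of "xst x0 c"], of x0] by blast
    have "c \<in> Ist x0" using I cT by simp
    have "is_solution T \<alpha> \<beta> A x0 (Ist x0) (xst x0) \<and> c \<in> Ist x0 \<and> c < T \<and> norm (xst x0 c) \<le> norm (xst x0 c)"
      using Ist_sol[of x0] \<open>c \<in> Ist x0\<close> cT' by simp
    then obtain z where z: "is_solution T \<alpha> \<beta> A x0 {0..min (c + h) T} z"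
      using h(2) by blast
    have "min (c + h) T \<in> {0..min (c + h) T}" using cT h T by auto
    then have "min (c + h) T \<in> Ist x0" using Ist_iff z by blast
    then show False using I cT' h by auto
  qed
qed

lemma Ist_open_blowup:
  assumes I: "Ist x0 = {0..<c}" and c: "0 < c"
  shows "filterlim (\<lambda>t. norm (xst x0 t)) at_top (at_left c)"
  unfolding filterlim_at_top
proof (rule ccontr)
  assume "\<not> (\<forall>Z. \<forall>\<^sub>F t in at_left c. Z \<le> norm (xst x0 t))"
  then obtain Z where Z: "\<not> (\<forall>\<^sub>F t in at_left c. Z \<le> norm (xst x0 t))" by blast
  have cT: "c \<le> T"
  proof (rule ccontr)
    assume "\<not> c \<le> T"
    then have "(T + c) / 2 \<in> Ist x0" using I T by auto
    then have "(T + c) / 2 \<le> T" using Ist_le by blast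
    then show False using \<open>\<not> c \<le> T\<close> by simp
  qed
  obtain h where h: "h > 0" "\<forall>I x t. is_solution T \<alpha> \<beta> A x0 I x \<and> t \<in> I \<and> t < T \<and> norm (x t) \<le> max Z 0 \<longrightarrow>
          (\<exists>z. is_solution T \<alpha> \<beta> A x0 {0..min (t + h) T} z)"
    using extend[OF max.cobounded2[of 0 Z], of x0] by blast
  define b where "b = max 0 (c - h)"
  have bc: "b < c" unfolding b_def using c h by simp
  obtain y where y: "b < y" "y < c" "\<not> Z \<le> norm (xst x0 y)"
    using Z bc unfolding eventually_at_left_field by blast
  have yI: "y \<in> Ist x0" using I y b_def by auto
  have "y < T" using y cT by simp
  moreover have "norm (xst x0 y) \<le> max Z 0" using y(3) by simp
  ultimately have "is_solution T \<alpha> \<beta> A x0 (Ist x0) (xst x0) \<and> y \<in> Ist x0 \<and> y < T \<and> norm (xst x0 y) \<le> max Z 0"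
    using Ist_sol[of x0] yI by simp
  then obtain z where "is_solution T \<alpha> \<beta> A x0 {0..min (y + h) T} z"
    using h(2) by blast
  moreover have "c \<in> {0..min (y + h) T}" using y b_def cT c by auto
  ultimately have "c \<in> Ist x0" using Ist_iff by blast
  then show False using I by simp
qed

lemma part1:
  "\<exists>I x. is_max_solution T \<alpha> \<beta> A x0 I x \<and>
            (I = {0..T} \<or>
             (\<exists>T'. 0 < T' \<and> T' \<le> T \<and> I = {0..<T'} \<and>
                   filterlim (\<lambda>t. norm (x t)) at_top (at_left T'))) \<and>
            (\<forall>J y. is_max_solution T \<alpha> \<beta> A x0 J y \<longrightarrow> J = I \<and> (\<forall>t\<in>I. y t = x t))"
proof -
  have A: "is_max_solution T \<alpha> \<beta> A x0 (Ist x0) (xst x0)" by (rule Ist_max)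
  obtain c where c: "0 \<le> c" "c \<le> T" "Ist x0 = {0..c} \<or> (0 < c \<and> Ist x0 = {0..<c})" using Ist_shape by blast
  have B: "Ist x0 = {0..T} \<or> (\<exists>T'. 0 < T' \<and> T' \<le> T \<and> Ist x0 = {0..<T'} \<and>
                   filterlim (\<lambda>t. norm (xst x0 t)) at_top (at_left T'))"
  proof (cases "Ist x0 = {0..c}")
    case True then show ?thesis using Ist_closed_T by blast
  next
    case False
    then have "0 < c" "Ist x0 = {0..<c}" using c by auto
    then show ?thesis using Ist_open_blowup c(2) by blast
  qed
  have C: "\<forall>J y. is_max_solution T \<alpha> \<beta> A x0 J y \<longrightarrow> J = Ist x0 \<and> (\<forall>t\<in>Ist x0. y t = xst x0 t)"
    using Ist_unique by blast
  show ?thesis using A B C by blast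
qed

end

lemma inf_valid:
  fixes f g :: "real \<Rightarrow> real \<Rightarrow> real"
  assumes ex: "m \<le> M0" "\<forall>u v. Q u v \<longrightarrow> f u v \<le> M0 * g u v"
    and g: "\<And>u v. Q u v \<Longrightarrow> g u v \<ge> 0"
  shows "m \<le> Inf {M. m \<le> M \<and> (\<forall>u v. Q u v \<longrightarrow> f u v \<le> M * g u v)} \<and>
    (\<forall>u v. Q u v \<longrightarrow> f u v \<le> Inf {M. m \<le> M \<and> (\<forall>u v. Q u v \<longrightarrow> f u v \<le> M * g u v)} * g u v)"
proof -
  define S where "S = {M. m \<le> M \<and> (\<forall>u v. Q u v \<longrightarrow> f u v \<le> M * g u v)}"
  have ne: "S \<noteq> {}" unfolding S_def using ex by blast
  have lb: "m \<le> M" if "M \<in> S" for M using that unfolding S_def by simp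
  have "m \<le> Inf S" using ne lb by (intro cInf_greatest) auto
  moreover have "f u v \<le> Inf S * g u v" if Q: "Q u v" for u v
  proof (cases "g u v = 0")
    case True
    have "f u v \<le> M0 * g u v" using ex Q by blast
    then show ?thesis using True by simp
  next
    case False
    then have gp: "g u v > 0" using g[OF Q] by simp
    have "f u v / g u v \<le> M" if "M \<in> S" for M
    proof -
      have "f u v \<le> M * g u v" using that Q unfolding S_def by blast
      then show ?thesis using gp by (simp add: divide_le_eq)
    qed
    then have "f u v / g u v \<le> Inf S" using ne by (intro cInf_greatest) auto
    then show ?thesis using gp by (simp add: divide_le_eq)
  qed
  ultimately show ?thesis unfolding S_def by blast
qed

lemma half_bound:
  fixes H R A0 lam \<beta> :: real
  assumes H: "H \<ge> 0" and R: "R \<ge> 1" and lam: "lam \<ge> 0" and be: "\<beta> > 0" and lb: "lam + \<beta> \<le> 1"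
    and ineq: "H \<le> A0 + (1/2) * (R powr lam * H powr \<beta>)"
  shows "H \<le> max R (2 * A0)"
proof (cases "H < R")
  case True then show ?thesis by simp
next
  case False
  then have HR: "R \<le> H" by simp
  then have H1: "H \<ge> 1" using R by simp
  have "R powr lam \<le> H powr lam" using HR R lam by (intro powr_mono2) auto
  then have "R powr lam * H powr \<beta> \<le> H powr lam * H powr \<beta>" by (intro mult_right_mono) auto
  also have "\<dots> = H powr (lam + \<beta>)" by (simp add: powr_add)
  also have "\<dots> \<le> H powr 1" using H1 lb by (intro powr_mono) auto
  finally have "R powr lam * H powr \<beta> \<le> H" using H1 by simp
  then have "H \<le> A0 + H / 2" using ineq by simp
  then show ?thesis by simp
qed

locale nyde_g = nyde T \<alpha> \<beta> A DA for T \<alpha> \<beta> and A :: "real \<Rightarrow> 'v::banach \<Rightarrow> 'v" and DA +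
  fixes lam :: real
  assumes lam: "0 < lam" "lam \<le> 1" "\<beta> + lam \<le> 1"
    and gr: "growth_holder_field T \<alpha> \<beta> lam A"
begin

lemma growth_C: "\<exists>Cg\<ge>1. \<forall>s t. 0 \<le> s \<and> s \<le> t \<and> t \<le> T \<longrightarrow> norm (A t 0 - A s 0) \<le> Cg * (t - s) powr \<alpha> \<and>
    (\<forall>R x y. 1 \<le> R \<and> norm x \<le> R \<and> norm y \<le> R \<longrightarrow>
       norm ((A t x - A s x) - (A t y - A s y)) \<le> Cg * (t - s) powr \<alpha> * R powr lam * norm (x - y) powr \<beta>)"
proof -
  obtain C where C: "\<forall>s t. 0 \<le> s \<and> s < t \<and> t \<le> T \<longrightarrow>
        norm (A t 0 - A s 0) \<le> C * (t - s) powr \<alpha> \<and>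
        (\<forall>R\<ge>1. \<forall>x y. norm x \<le> R \<and> norm y \<le> R \<and> x \<noteq> y \<longrightarrow>
           norm ((A t x - A s x) - (A t y - A s y)) \<le> C * (t - s) powr \<alpha> * R powr lam * norm (x - y) powr \<beta>)"
    using gr unfolding growth_holder_field_def by blast
  define Cg where "Cg = max C 1"
  have Cg: "Cg \<ge> 1" "C \<le> Cg" unfolding Cg_def by auto
  show ?thesis
  proof (intro exI[of _ Cg] conjI allI impI)
    show "Cg \<ge> 1" by fact
    fix s t assume st: "0 \<le> s \<and> s \<le> t \<and> t \<le> T"
    show "norm (A t 0 - A s 0) \<le> Cg * (t - s) powr \<alpha>"
    proof (cases "s = t")
      case True then show ?thesis using Cg by simp
    next
      case False
      then have "0 \<le> s \<and> s < t \<and> t \<le> T" using st by auto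
      then have "norm (A t 0 - A s 0) \<le> C * (t - s) powr \<alpha>" using C by blast
      also have "\<dots> \<le> Cg * (t - s) powr \<alpha>" using Cg by (intro mult_right_mono) auto
      finally show ?thesis .
    qed
    fix R :: real and x y :: 'v assume Rxy: "1 \<le> R \<and> norm x \<le> R \<and> norm y \<le> R"
    show "norm ((A t x - A s x) - (A t y - A s y)) \<le> Cg * (t - s) powr \<alpha> * R powr lam * norm (x - y) powr \<beta>"
    proof (cases "s = t \<or> x = y")
      case True then show ?thesis using Cg by (auto simp del: norm_le_zero_iff)
    next
      case False
      then have "0 \<le> s \<and> s < t \<and> t \<le> T" "x \<noteq> y" using st by auto
      then have "norm ((A t x - A s x) - (A t y - A s y)) \<le> C * (t - s) powr \<alpha> * R powr lam * norm (x - y) powr \<beta>"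
        using C Rxy by blast
      also have "\<dots> \<le> Cg * (t - s) powr \<alpha> * R powr lam * norm (x - y) powr \<beta>"
        using Cg by (intro mult_right_mono) auto
      finally show ?thesis .
    qed
  qed
qed

end

context nyde_g begin

definition Cg :: real where "Cg = (SOME Cg. Cg \<ge> 1 \<and> (\<forall>s t. 0 \<le> s \<and> s \<le> t \<and> t \<le> T \<longrightarrow> norm (A t 0 - A s 0) \<le> Cg * (t - s) powr \<alpha> \<and>
    (\<forall>R x y. 1 \<le> R \<and> norm x \<le> R \<and> norm y \<le> R \<longrightarrow>
       norm ((A t x - A s x) - (A t y - A s y)) \<le> Cg * (t - s) powr \<alpha> * R powr lam * norm (x - y) powr \<beta>)))"

lemma Cg_prop: "Cg \<ge> 1 \<and> (\<forall>s t. 0 \<le> s \<and> s \<le> t \<and> t \<le> T \<longrightarrow> norm (A t 0 - A s 0) \<le> Cg * (t - s) powr \<alpha> \<and>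
    (\<forall>R x y. 1 \<le> R \<and> norm x \<le> R \<and> norm y \<le> R \<longrightarrow>
       norm ((A t x - A s x) - (A t y - A s y)) \<le> Cg * (t - s) powr \<alpha> * R powr lam * norm (x - y) powr \<beta>))"
  unfolding Cg_def by (rule someI_ex[OF growth_C])

lemma Cg1: "Cg \<ge> 1" using Cg_prop by blast

lemma Cg0: "0 \<le> s \<Longrightarrow> s \<le> t \<Longrightarrow> t \<le> T \<Longrightarrow> norm (A t 0 - A s 0) \<le> Cg * (t - s) powr \<alpha>"
  using Cg_prop by blast

lemma Cgh: "0 \<le> s \<Longrightarrow> s \<le> t \<Longrightarrow> t \<le> T \<Longrightarrow> 1 \<le> R \<Longrightarrow> norm x \<le> R \<Longrightarrow> norm y \<le> R \<Longrightarrow>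
   norm ((A t x - A s x) - (A t y - A s y)) \<le> Cg * (t - s) powr \<alpha> * R powr lam * norm (x - y) powr \<beta>"
  using Cg_prop by blast

lemma gam_growth:
  assumes st: "0 \<le> s" "s \<le> t" "t \<le> T" and R: "1 \<le> R" and x: "norm x \<le> R"
  shows "norm (A t x - A s x) \<le> Cg * (t - s) powr \<alpha> * (1 + R)"
proof -
  have n0: "norm (0::'v) \<le> R" using R by simp
  have "norm (A t x - A s x) \<le> norm (A t 0 - A s 0) + norm ((A t x - A s x) - (A t 0 - A s 0))"
    using norm_triangle_ineq[of "A t 0 - A s 0" "(A t x - A s x) - (A t 0 - A s 0)"] by simp
  also have "norm ((A t x - A s x) - (A t 0 - A s 0)) \<le> Cg * (t - s) powr \<alpha> * R powr lam * norm (x - 0) powr \<beta>"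
    by (rule Cgh[OF st R x n0])
  also have "R powr lam * norm (x - 0) powr \<beta> \<le> R"
  proof -
    have "norm (x - 0) powr \<beta> \<le> R powr \<beta>" using x be by (intro powr_mono2) auto
    then have "R powr lam * norm (x - 0) powr \<beta> \<le> R powr lam * R powr \<beta>" by (intro mult_left_mono) auto
    also have "\<dots> = R powr (lam + \<beta>)" by (simp add: powr_add)
    also have "\<dots> \<le> R powr 1" using R lam by (intro powr_mono) auto
    finally show ?thesis using R by simp
  qed
  then have "Cg * (t - s) powr \<alpha> * R powr lam * norm (x - 0) powr \<beta> \<le> Cg * (t - s) powr \<alpha> * R"
    using Cg1 by (simp add: mult.assoc mult_left_mono)
  finally have "norm (A t x - A s x) \<le> norm (A t 0 - A s 0) + Cg * (t - s) powr \<alpha> * R" by simp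
  moreover have "norm (A t 0 - A s 0) \<le> Cg * (t - s) powr \<alpha>" by (rule Cg0[OF st])
  ultimately show ?thesis by (simp add: algebra_simps)
qed

lemma delta_growth:
  assumes ab: "0 \<le> a" "b \<le> T" and R: "1 \<le> R" and xb: "\<And>r. a \<le> r \<Longrightarrow> r \<le> b \<Longrightarrow> norm (x r) \<le> R"
    and hx: "hb x a b \<alpha> H" and H: "H \<ge> 0"
    and su: "a \<le> s" "s \<le> u" "u \<le> t" "t \<le> b"
  shows "norm (gam A x s t - gam A x s u - gam A x u t) \<le> (Cg * R powr lam * H powr \<beta>) * (t - s) powr th"
proof -
  define N where "N = norm (x s - x u)"
  have h1: "norm (gam A x s t - gam A x s u - gam A x u t) \<le> Cg * (t - u) powr \<alpha> * R powr lam * N powr \<beta>"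
    unfolding delta_gam N_def by (rule Cgh) (use ab su R xb in auto)
  have "N powr \<beta> \<le> (H * (u - s) powr \<alpha>) powr \<beta>"
    unfolding N_def using hbD[OF hx su(1,2)] su be by (intro powr_mono2) (auto simp: norm_minus_commute)
  also have "(H * (u - s) powr \<alpha>) powr \<beta> = H powr \<beta> * (u - s) powr (\<beta> * \<alpha>)"
    using H su by (simp add: powr_mult powr_powr mult.commute)
  finally have h2: "N powr \<beta> \<le> H powr \<beta> * (u - s) powr (\<beta> * \<alpha>)" .
  have h3: "(t - u) powr \<alpha> * (u - s) powr (\<beta> * \<alpha>) \<le> (t - s) powr th"
    using pw_comb[of s u t \<alpha> "\<beta> * \<alpha>"] su al be by simp
  have c0: "Cg * (t - u) powr \<alpha> * R powr lam \<ge> 0" using Cg1 by simp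
  have "Cg * (t - u) powr \<alpha> * R powr lam * N powr \<beta> \<le> Cg * (t - u) powr \<alpha> * R powr lam * (H powr \<beta> * (u - s) powr (\<beta> * \<alpha>))"
    using h2 c0 by (intro mult_left_mono) auto
  also have "\<dots> = (Cg * R powr lam * H powr \<beta>) * ((t - u) powr \<alpha> * (u - s) powr (\<beta> * \<alpha>))" by (simp add: mult_ac)
  also have "\<dots> \<le> (Cg * R powr lam * H powr \<beta>) * (t - s) powr th"
    using h3 Cg1 by (intro mult_left_mono) auto
  finally show ?thesis using h1 by linarith
qed

end

context nyde_g begin

lemma apriori_step:
  "\<exists>h>0. \<forall>x x0 \<tau> R M a b. solpath x x0 \<tau> R M \<and> 0 \<le> a \<and> a \<le> b \<and> b \<le> \<tau> \<and> b - a \<le> h \<longrightarrow>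
      (\<forall>s. a \<le> s \<and> s \<le> b \<longrightarrow> norm (x s) \<le> 2 * norm (x a) + 1)"
proof -
  define cs where "cs = csew th"
  have cs0: "cs > 0" unfolding cs_def using csew_pos[OF th_gt] .
  define Kc where "Kc = 2 * Cg + 1"
  have Kc1: "Kc \<ge> 1" unfolding Kc_def using Cg1 by simp
  obtain h1 where h1: "h1 > 0" "\<forall>h'. 0 \<le> h' \<and> h' \<le> h1 \<longrightarrow> (cs * Cg) * h' powr (\<beta> * \<alpha>) \<le> 1/2"
    using small_pow[of "\<beta> * \<alpha>" "cs * Cg" "1/2"] al be cs0 Cg1 by auto
  obtain h2 where h2: "h2 > 0" "\<forall>h'. 0 \<le> h' \<and> h' \<le> h2 \<longrightarrow> Kc * h' powr \<alpha> \<le> 1/4"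
    using small_pow[of \<alpha> Kc "1/4"] al Kc1 by auto
  define h where "h = min h1 h2"
  have hp: "h > 0" "cs * Cg * h powr (\<beta> * \<alpha>) \<le> 1/2" "Kc * h powr \<alpha> \<le> 1/4"
    unfolding h_def using h1 h2 by auto
  show ?thesis
  proof (intro exI[of _ h] conjI allI impI)
    show "h > 0" by fact
    fix x :: "real \<Rightarrow> 'v" and x0 :: 'v and \<tau> R M a b s
    assume as: "solpath x x0 \<tau> R M \<and> 0 \<le> a \<and> a \<le> b \<and> b \<le> \<tau> \<and> b - a \<le> h"
    assume s: "a \<le> s \<and> s \<le> b"
    have P: "solpath x x0 \<tau> R M" using as by blast
    have p: "0 \<le> \<tau>" "\<tau> \<le> T" "R > 0" "M \<ge> 0" "\<And>r. 0 \<le> r \<Longrightarrow> r \<le> \<tau> \<Longrightarrow> norm (x r) \<le> R" "hb x 0 \<tau> \<alpha> M"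
      using P unfolding solpath_def by auto
    have ab: "0 \<le> a" "a \<le> b" "b \<le> \<tau>" "b - a \<le> h" using as by auto
    have bT: "b \<le> T" using ab p by simp
    define CR where "CR = CC R"
    have CR: "goodC R CR" unfolding CR_def using CC p(3) by simp
    have xd: "x v - x u = yint x u v" if "a \<le> u" "u \<le> v" "v \<le> b" for u v
      using solpath_yint[OF P CR] that ab by simp
    have sc: "sew_conv (gam A x) u v (yint x u v)" if "a \<le> u" "u \<le> v" "v \<le> b" for u v
      using yi_exists[OF CR order.refl p(2) p(5) p(6) p(4) al(1) th_gt, of u v] that ab by simp
    define Q where "Q u v \<longleftrightarrow> a \<le> u \<and> u \<le> v \<and> v \<le> b" for u v
    define Rmin where "Rmin = Inf {r. 1 \<le> r \<and> (\<forall>u v. Q u v \<longrightarrow> norm (x v) \<le> r * 1)}"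
    have Rv0: "1 \<le> max 1 R" "\<forall>u v. Q u v \<longrightarrow> norm (x v) \<le> max 1 R * 1"
      using p(5) ab unfolding Q_def by (auto intro: order_trans[OF _ max.cobounded2])
    have Rv: "1 \<le> Rmin \<and> (\<forall>u v. Q u v \<longrightarrow> norm (x v) \<le> Rmin * 1)"
      unfolding Rmin_def by (rule inf_valid[OF Rv0]) simp
    have Rb: "norm (x v) \<le> Rmin" if "a \<le> v" "v \<le> b" for v using Rv that unfolding Q_def by fastforce
    define Hmin where "Hmin = Inf {H. 0 \<le> H \<and> (\<forall>u v. Q u v \<longrightarrow> norm (x v - x u) \<le> H * (v - u) powr \<alpha>)}"
    have Hv0: "0 \<le> M" "\<forall>u v. Q u v \<longrightarrow> norm (x v - x u) \<le> M * (v - u) powr \<alpha>"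
      using p(4) hbD[OF p(6)] ab unfolding Q_def by auto
    have Hv: "0 \<le> Hmin \<and> (\<forall>u v. Q u v \<longrightarrow> norm (x v - x u) \<le> Hmin * (v - u) powr \<alpha>)"
      unfolding Hmin_def by (rule inf_valid[OF Hv0]) simp
    have hbH: "hb x a b \<alpha> Hmin" using Hv unfolding hb_def Q_def by blast
    have H0: "Hmin \<ge> 0" using Hv by blast
    define K where "K = Cg * Rmin powr lam * Hmin powr \<beta>"
    have K0: "K \<ge> 0" unfolding K_def using Cg1 by simp
    define H' where "H' = Cg * (1 + Rmin) + (1/2) * (Rmin powr lam * Hmin powr \<beta>)"
    have key: "norm (x v - x u) \<le> H' * (v - u) powr \<alpha>" if uv: "a \<le> u" "u \<le> v" "v \<le> b" for u v
    proof -
      have e2: "norm (yint x u v - gam A x u v) \<le> cs * K * (v - u) powr th"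
      proof (rule sew_le[OF uv(2) sc[OF uv]])
        fix pp n assume "partition_of pp n u v"
        then show "norm (psum (gam A x) pp n - gam A x u v) \<le> cs * K * (v - u) powr th"
          unfolding cs_def K_def
          using sew_bound[OF th_gt K0[unfolded K_def] delta_growth[OF ab(1) bT _ Rb hbH H0]] Rv uv by blast
      qed
      have e3: "norm (gam A x u v) \<le> Cg * (v - u) powr \<alpha> * (1 + Rmin)"
        unfolding gam_def using gam_growth[of u v Rmin "x u"] Rv Rb[of u] uv ab bT by auto
      have e4: "(v - u) powr th \<le> (v - u) powr \<alpha> * h powr (\<beta> * \<alpha>)"
      proof -
        have "(v - u) powr th = (v - u) powr \<alpha> * (v - u) powr (\<beta> * \<alpha>)" by (simp add: powr_add)
        also have "\<dots> \<le> (v - u) powr \<alpha> * h powr (\<beta> * \<alpha>)"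
          using uv ab al be by (intro mult_left_mono powr_mono2) auto
        finally show ?thesis .
      qed
      have e5: "cs * K * (v - u) powr th \<le> (1/2) * (Rmin powr lam * Hmin powr \<beta>) * (v - u) powr \<alpha>"
      proof -
        have "cs * K * (v - u) powr th \<le> cs * K * ((v - u) powr \<alpha> * h powr (\<beta> * \<alpha>))"
          using e4 cs0 K0 by (intro mult_left_mono) auto
        also have "\<dots> = (cs * Cg * h powr (\<beta> * \<alpha>)) * (Rmin powr lam * Hmin powr \<beta>) * (v - u) powr \<alpha>"
          unfolding K_def by (simp add: mult_ac)
        also have "\<dots> \<le> (1/2) * (Rmin powr lam * Hmin powr \<beta>) * (v - u) powr \<alpha>"
          using hp(2) by (intro mult_right_mono) auto
        finally show ?thesis .
      qed
      have "norm (x v - x u) = norm (yint x u v)" using xd[OF uv] by simp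
      also have "\<dots> \<le> norm (yint x u v - gam A x u v) + norm (gam A x u v)"
        using norm_triangle_ineq[of "yint x u v - gam A x u v" "gam A x u v"] by simp
      also have "\<dots> \<le> (1/2) * (Rmin powr lam * Hmin powr \<beta>) * (v - u) powr \<alpha> + Cg * (v - u) powr \<alpha> * (1 + Rmin)"
        using e2 e3 e5 by linarith
      also have "\<dots> = H' * (v - u) powr \<alpha>" unfolding H'_def by (simp add: algebra_simps)
      finally show ?thesis .
    qed
    have HH': "Hmin \<le> H'"
    proof -
      have "H' \<in> {H. 0 \<le> H \<and> (\<forall>u v. Q u v \<longrightarrow> norm (x v - x u) \<le> H * (v - u) powr \<alpha>)}"
      proof -
        have "0 \<le> H'" unfolding H'_def using Cg1 Rv by (intro add_nonneg_nonneg mult_nonneg_nonneg) auto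
        then show ?thesis using key unfolding Q_def by auto
      qed
      moreover have "bdd_below {H. 0 \<le> H \<and> (\<forall>u v. Q u v \<longrightarrow> norm (x v - x u) \<le> H * (v - u) powr \<alpha>)}"
        by (rule bdd_belowI[of _ 0]) auto
      ultimately show ?thesis unfolding Hmin_def by (rule cInf_lower)
    qed
    have Hb: "Hmin \<le> Kc * (1 + Rmin)"
    proof -
      have "Hmin \<le> max Rmin (2 * (Cg * (1 + Rmin)))"
        by (rule half_bound[OF H0 _ _ be(1)]) (use Rv lam HH' in \<open>auto simp: H'_def\<close>)
      also have "\<dots> \<le> Kc * (1 + Rmin)" unfolding Kc_def using Rv Cg1 by (auto simp: algebra_simps)
      finally show ?thesis .
    qed
    have bnd: "norm (x r) \<le> norm (x a) + (1 + Rmin) / 4" if r: "a \<le> r" "r \<le> b" for r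
    proof -
      have "norm (x r - x a) \<le> Hmin * (r - a) powr \<alpha>" using hbD[OF hbH order.refl r] .
      also have "\<dots> \<le> Kc * (1 + Rmin) * h powr \<alpha>"
        using Hb r ab H0 al by (intro mult_mono powr_mono2) auto
      also have "\<dots> = (Kc * h powr \<alpha>) * (1 + Rmin)" by (simp add: mult_ac)
      also have "\<dots> \<le> (1/4) * (1 + Rmin)" using hp(3) Rv by (intro mult_right_mono) auto
      finally have "norm (x r - x a) \<le> (1 + Rmin) / 4" by simp
      moreover have "norm (x r) \<le> norm (x r - x a) + norm (x a)"
        using norm_triangle_ineq[of "x r - x a" "x a"] by simp
      ultimately show ?thesis by linarith
    qed
    have RR: "Rmin \<le> max 1 (norm (x a) + (1 + Rmin) / 4)"
    proof -
      have "max 1 (norm (x a) + (1 + Rmin) / 4) \<in> {r. 1 \<le> r \<and> (\<forall>u v. Q u v \<longrightarrow> norm (x v) \<le> r * 1)}"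
        using bnd unfolding Q_def by (auto intro: order_trans[OF _ max.cobounded2])
      moreover have "bdd_below {r. 1 \<le> r \<and> (\<forall>u v. Q u v \<longrightarrow> norm (x v) \<le> r * 1)}"
        by (rule bdd_belowI[of _ 1]) auto
      ultimately show ?thesis unfolding Rmin_def by (rule cInf_lower)
    qed
    have "Rmin \<le> 2 * norm (x a) + 1"
    proof (cases "norm (x a) + (1 + Rmin) / 4 \<le> 1")
      case True
      then have "Rmin \<le> 1" using RR by simp
      moreover have "norm (x a) \<ge> 0" by simp
      ultimately show ?thesis by linarith
    next
      case False
      then have "Rmin \<le> norm (x a) + (1 + Rmin) / 4" using RR by simp
      then have "4 * Rmin \<le> 4 * (norm (x a) + (1 + Rmin) / 4)" by (rule mult_left_mono) simp
      also have "4 * (norm (x a) + (1 + Rmin) / 4) = 4 * norm (x a) + (1 + Rmin)" by (simp add: algebra_simps)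
      finally have "4 * Rmin \<le> 4 * norm (x a) + (1 + Rmin)" .
      moreover have "norm (x a) \<ge> 0" by simp
      ultimately show ?thesis by linarith
    qed
    then show "norm (x s) \<le> 2 * norm (x a) + 1" using Rb[of s] s by simp
  qed
qed

end

context nyde_g begin

lemma sol_bound: "\<exists>B. \<forall>I x t. is_solution T \<alpha> \<beta> A x0 I x \<and> t \<in> I \<longrightarrow> norm (x t) \<le> B"
proof -
  obtain h where h: "h > 0" "\<forall>x x0 \<tau> R M a b. solpath x x0 \<tau> R M \<and> 0 \<le> a \<and> a \<le> b \<and> b \<le> \<tau> \<and> b - a \<le> h \<longrightarrow>
      (\<forall>s. a \<le> s \<and> s \<le> b \<longrightarrow> norm (x s) \<le> 2 * norm (x a) + 1)"
    using apriori_step by blast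
  define B where "B k = (norm x0 + 1) * 3 ^ k" for k :: nat
  have B1: "B k \<ge> 1" for k
  proof -
    have a: "1 \<le> norm x0 + 1" by simp
    have b: "(1::real) \<le> 3 ^ k" by (rule one_le_power) simp
    have "1 * 1 \<le> (norm x0 + 1) * 3 ^ k" by (rule mult_mono[OF a b]) auto
    then show ?thesis unfolding B_def by simp
  qed
  obtain N :: nat where N: "T / h < real N" using reals_Archimedean2 by blast
  have TN: "T \<le> real N * h" using N h by (simp add: field_simps)
  show ?thesis
  proof (intro exI[of _ "B N"] allI impI)
    fix I x t assume a: "is_solution T \<alpha> \<beta> A x0 I x \<and> t \<in> I"
    obtain R M where P: "solpath x x0 t R M" using sol_solpath a by blast
    have p: "0 \<le> t" "t \<le> T" "x 0 = x0" using P unfolding solpath_def by auto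
    have step: "\<forall>s. 0 \<le> s \<and> s \<le> min (real k * h) t \<longrightarrow> norm (x s) \<le> B k" for k
    proof (induction k)
      case 0 then show ?case using p(3) unfolding B_def by auto
    next
      case (Suc k)
      define a where "a = min (real k * h) t"
      define b where "b = min (real (Suc k) * h) t"
      have abp: "0 \<le> a" "a \<le> b" "b \<le> t" "b - a \<le> h" unfolding a_def b_def using h p
        by (auto simp: algebra_simps min_def)
      have xa: "norm (x a) \<le> B k" using Suc abp unfolding a_def by auto
      have Bs: "B k \<le> B (Suc k)" unfolding B_def by simp
      show ?case
      proof (intro allI impI)
        fix s assume s: "0 \<le> s \<and> s \<le> min (real (Suc k) * h) t"
        show "norm (x s) \<le> B (Suc k)"
        proof (cases "s \<le> a")
          case True then show ?thesis using Suc s Bs unfolding a_def by fastforce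
        next
          case False
          then have sab: "a \<le> s \<and> s \<le> b" using s unfolding b_def by auto
          have "norm (x s) \<le> 2 * norm (x a) + 1" using h(2) P abp sab by blast
          also have "\<dots> \<le> 2 * B k + 1" using xa by simp
          also have "\<dots> \<le> B (Suc k)" using B1[of k] unfolding B_def by simp
          finally show ?thesis .
        qed
      qed
    qed
    have "t \<le> min (real N * h) t" using TN p by simp
    then show "norm (x t) \<le> B N" using step[of N] p by auto
  qed
qed

lemma part2: "\<exists>x. is_solution T \<alpha> \<beta> A x0 {0..T} x \<and>
                 (\<forall>y. is_solution T \<alpha> \<beta> A x0 {0..T} y \<longrightarrow> (\<forall>t\<in>{0..T}. y t = x t))"
proof -
  obtain B where B: "\<forall>I x t. is_solution T \<alpha> \<beta> A x0 I x \<and> t \<in> I \<longrightarrow> norm (x t) \<le> B"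
    using sol_bound by blast
  obtain c where c: "0 \<le> c" "c \<le> T" "Ist x0 = {0..c} \<or> (0 < c \<and> Ist x0 = {0..<c})" using Ist_shape by blast
  have "Ist x0 = {0..T}"
  proof (cases "Ist x0 = {0..c}")
    case True then show ?thesis using Ist_closed_T by blast
  next
    case False
    then have c0: "0 < c" and I: "Ist x0 = {0..<c}" using c by auto
    have "filterlim (\<lambda>t. norm (xst x0 t)) at_top (at_left c)" by (rule Ist_open_blowup[OF I c0])
    then have "\<forall>\<^sub>F t in at_left c. B + 1 \<le> norm (xst x0 t)" unfolding filterlim_at_top by blast
    then obtain b where b: "b < c" "\<forall>y>b. y < c \<longrightarrow> B + 1 \<le> norm (xst x0 y)"
      unfolding eventually_at_left_field by blast
    define y where "y = (max b 0 + c) / 2"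
    have y: "b < y" "y < c" "0 \<le> y" unfolding y_def using b c0 by auto
    then have "B + 1 \<le> norm (xst x0 y)" using b by blast
    moreover have "y \<in> Ist x0" using I y by simp
    then have "norm (xst x0 y) \<le> B" using B Ist_sol[of x0] by blast
    ultimately show ?thesis by simp
  qed
  then have S: "is_solution T \<alpha> \<beta> A x0 {0..T} (xst x0)" using Ist_sol[of x0] by simp
  show ?thesis
  proof (intro exI[of _ "xst x0"] conjI allI impI ballI)
    show "is_solution T \<alpha> \<beta> A x0 {0..T} (xst x0)" by (rule S)
    fix y t assume "is_solution T \<alpha> \<beta> A x0 {0..T} y" "t \<in> {0..T}"
    then show "y t = xst x0 t" using sol_agree[OF _ S] by blast
  qed
qed

end

theorem mainTheorem13:
  fixes A :: "real \<Rightarrow> 'v::{banach, second_countable_topology} \<Rightarrow> 'v"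
    and T \<alpha> \<beta> :: real
  assumes T: "T > 0"
    and \<alpha>: "0 < \<alpha>" "\<alpha> < 1" and \<beta>: "0 < \<beta>" "\<beta> < 1"
    and \<alpha>\<beta>: "\<alpha> * (1 + \<beta>) > 1"
    and A0: "\<forall>x. A 0 x = 0"
    and A: "loc_holder_field_1 T \<alpha> \<beta> A"
  shows "(\<forall>x0. \<exists>I x. is_max_solution T \<alpha> \<beta> A x0 I x \<and>
            (I = {0..T} \<or>
             (\<exists>T'. 0 < T' \<and> T' \<le> T \<and> I = {0..<T'} \<and>
                   filterlim (\<lambda>t. norm (x t)) at_top (at_left T'))) \<and>
            (\<forall>J y. is_max_solution T \<alpha> \<beta> A x0 J y \<longrightarrow> J = I \<and> (\<forall>t\<in>I. y t = x t)))
       \<and> (\<forall>lam. 0 < lam \<and> lam \<le> 1 \<and> \<beta> + lam \<le> 1 \<and> growth_holder_field T \<alpha> \<beta> lam A \<longrightarrow>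
            (\<forall>x0. \<exists>x. is_solution T \<alpha> \<beta> A x0 {0..T} x \<and>
                 (\<forall>y. is_solution T \<alpha> \<beta> A x0 {0..T} y \<longrightarrow> (\<forall>t\<in>{0..T}. y t = x t))))"
proof -
  obtain DA :: "real \<Rightarrow> 'v \<Rightarrow> ('v \<Rightarrow>\<^sub>L 'v)" where
    Ah: "loc_holder_field T \<alpha> \<beta> A" and
    Dd: "\<forall>t\<in>{0..T}. \<forall>x. (A t has_derivative blinfun_apply (DA t x)) (at x)" and
    Dh: "loc_holder_field T \<alpha> \<beta> DA"
    using A unfolding loc_holder_field_1_def by blast
  have N: "nyde T \<alpha> \<beta> A DA"
    unfolding nyde_def using T \<alpha> \<beta> \<alpha>\<beta> Ah Dd Dh by blast
  have P1: "\<forall>x0. \<exists>I x. is_max_solution T \<alpha> \<beta> A x0 I x \<and>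
            (I = {0..T} \<or>
             (\<exists>T'. 0 < T' \<and> T' \<le> T \<and> I = {0..<T'} \<and>
                   filterlim (\<lambda>t. norm (x t)) at_top (at_left T'))) \<and>
            (\<forall>J y. is_max_solution T \<alpha> \<beta> A x0 J y \<longrightarrow> J = I \<and> (\<forall>t\<in>I. y t = x t))"
    using nyde.part1[OF N] by blast
  have P2: "\<forall>lam. 0 < lam \<and> lam \<le> 1 \<and> \<beta> + lam \<le> 1 \<and> growth_holder_field T \<alpha> \<beta> lam A \<longrightarrow>
            (\<forall>x0. \<exists>x. is_solution T \<alpha> \<beta> A x0 {0..T} x \<and>
                 (\<forall>y. is_solution T \<alpha> \<beta> A x0 {0..T} y \<longrightarrow> (\<forall>t\<in>{0..T}. y t = x t)))"
  proof (intro allI impI)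
    fix lam x0 assume l: "0 < lam \<and> lam \<le> 1 \<and> \<beta> + lam \<le> 1 \<and> growth_holder_field T \<alpha> \<beta> lam A"
    have G: "nyde_g T \<alpha> \<beta> A DA lam"
      unfolding nyde_g_def nyde_g_axioms_def using N l by blast
    show "\<exists>x. is_solution T \<alpha> \<beta> A x0 {0..T} x \<and>
                 (\<forall>y. is_solution T \<alpha> \<beta> A x0 {0..T} y \<longrightarrow> (\<forall>t\<in>{0..T}. y t = x t))"
      by (rule nyde_g.part2[OF G])
  qed
  show ?thesis using P1 P2 by blast
qed

end
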